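(* Let $K$ be a number field and $d\ge 0$. Let $N_0$ be a positive integer such that for every finite field extension $L/K$ with $[L:K]\le d^2$ and every root of unity $\zeta\in L$ one has $\zeta^{N_0}=1$, and put $N\coloneqq N_0$. Let $A\in\mathrm{GL}_d(K)$ and let $V\subseteq K^d$ be a vector subspace. If $V$ is $A^n$-invariant for some $n\ge1$, then $V$ is $A^N$-invariant.
   Context: A subspace $V$ is $B$-invariant if $BV\subseteq V$. *)

theory Defs
  imports Main "Jordan_Normal_Form.Matrix"
begin

text \<open>All fields are realised as subfields of the complex numbers.\<close>

definition subfield :: "complex set \<Rightarrow> bool" where
  "subfield F \<longleftrightarrow> 0 \<in> F \<and> 1 \<in> F \<and>
     (\<forall>x\<in>F. \<forall>y\<in>F. x + y \<in> F \<and> x * y \<in> F) \<and>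
     (\<forall>x\<in>F. - x \<in> F) \<and> (\<forall>x\<in>F. x \<noteq> 0 \<longrightarrow> inverse x \<in> F)"

definition span_over :: "complex set \<Rightarrow> complex set \<Rightarrow> complex set" where
  "span_over K S = {x. \<exists>T c. finite T \<and> T \<subseteq> S \<and> (\<forall>t\<in>T. c t \<in> K) \<and>
                              x = (\<Sum>t\<in>T. c t * t)}"

definition lin_indep_over :: "complex set \<Rightarrow> complex set \<Rightarrow> bool" where
  "lin_indep_over K S \<longleftrightarrow> (\<forall>T c. finite T \<and> T \<subseteq> S \<and> (\<forall>t\<in>T. c t \<in> K) \<and>
                              (\<Sum>t\<in>T. c t * t) = 0 \<longrightarrow> (\<forall>t\<in>T. c t = 0))"

definition is_basis_over :: "complex set \<Rightarrow> complex set \<Rightarrow> complex set \<Rightarrow> bool" where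
  "is_basis_over K L B \<longleftrightarrow> B \<subseteq> L \<and> lin_indep_over K B \<and> span_over K B = L"

definition finite_ext :: "complex set \<Rightarrow> complex set \<Rightarrow> bool" where
  "finite_ext K L \<longleftrightarrow> subfield K \<and> subfield L \<and> K \<subseteq> L \<and>
                      (\<exists>B. finite B \<and> is_basis_over K L B)"

text \<open>The degree [L:K], the cardinality of a basis (meaningful when finite_ext K L).\<close>
definition ext_degree :: "complex set \<Rightarrow> complex set \<Rightarrow> nat" where
  "ext_degree K L = card (SOME B. finite B \<and> is_basis_over K L B)"

definition number_field :: "complex set \<Rightarrow> bool" where
  "number_field K \<longleftrightarrow> finite_ext \<rat> K"

definition root_of_unity :: "complex \<Rightarrow> bool" where
  "root_of_unity z \<longleftrightarrow> (\<exists>m>0. z ^ m = 1)"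

definition entries_in :: "complex set \<Rightarrow> complex mat \<Rightarrow> bool" where
  "entries_in K A \<longleftrightarrow> (\<forall>i<dim_row A. \<forall>j<dim_col A. A $$ (i, j) \<in> K)"

definition GL_over :: "nat \<Rightarrow> complex set \<Rightarrow> complex mat set" where
  "GL_over d K = {A. A \<in> carrier_mat d d \<and> entries_in K A \<and>
     (\<exists>B. B \<in> carrier_mat d d \<and> entries_in K B \<and> A * B = 1\<^sub>m d \<and> B * A = 1\<^sub>m d)}"

definition Kvecs :: "complex set \<Rightarrow> nat \<Rightarrow> complex vec set" where
  "Kvecs K d = {v. v \<in> carrier_vec d \<and> (\<forall>i<d. v $ i \<in> K)}"

definition K_subspace :: "complex set \<Rightarrow> nat \<Rightarrow> complex vec set \<Rightarrow> bool" where
  "K_subspace K d V \<longleftrightarrow> V \<subseteq> Kvecs K d \<and> 0\<^sub>v d \<in> V \<and>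
     (\<forall>v\<in>V. \<forall>w\<in>V. v + w \<in> V) \<and> (\<forall>c\<in>K. \<forall>v\<in>V. c \<cdot>\<^sub>v v \<in> V)"

definition invariant_under :: "complex mat \<Rightarrow> complex vec set \<Rightarrow> bool" where
  "invariant_under B V \<longleftrightarrow> (\<forall>v\<in>V. B *\<^sub>v v \<in> V)"

end

theory Submission
  imports Defs "Jordan_Normal_Form.Char_Poly" "Jordan_Normal_Form.VS_Connect"
begin

lemma sfD:
  assumes "subfield K"
  shows "0 \<in> K" "1 \<in> K" "\<And>x y. x \<in> K \<Longrightarrow> y \<in> K \<Longrightarrow> x + y \<in> K"
    "\<And>x y. x \<in> K \<Longrightarrow> y \<in> K \<Longrightarrow> x * y \<in> K"
    "\<And>x. x \<in> K \<Longrightarrow> - x \<in> K" "\<And>x. x \<in> K \<Longrightarrow> inverse x \<in> K"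
  using assms unfolding subfield_def by (auto simp: inverse_eq_divide)

lemma sf_diff: "subfield K \<Longrightarrow> x \<in> K \<Longrightarrow> y \<in> K \<Longrightarrow> x - y \<in> K"
  using sfD[of K] by (metis diff_conv_add_uminus)

lemma sf_div: "subfield K \<Longrightarrow> x \<in> K \<Longrightarrow> y \<in> K \<Longrightarrow> x / y \<in> K"
  using sfD[of K] by (metis divide_inverse)

lemma sf_sum: "subfield K \<Longrightarrow> (\<And>t. t \<in> T \<Longrightarrow> f t \<in> K) \<Longrightarrow> sum f T \<in> K"
proof (induction T rule: infinite_finite_induct)
  case (insert x F) then show ?case using sfD[of K] by auto
qed (auto simp: sfD)

lemma sf_prod: "subfield K \<Longrightarrow> (\<And>t. t \<in> T \<Longrightarrow> f t \<in> K) \<Longrightarrow> prod f T \<in> K"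
proof (induction T rule: infinite_finite_induct)
  case (insert x F) then show ?case using sfD[of K] by auto
qed (auto simp: sfD)

lemma sf_power: "subfield K \<Longrightarrow> x \<in> K \<Longrightarrow> x ^ n \<in> K"
  by (induction n) (auto simp: sfD)

lemma sum_if_restrict:
  fixes c :: "complex \<Rightarrow> complex"
  assumes "finite U" "T \<subseteq> U"
  shows "(\<Sum>t\<in>U. (if t \<in> T then c t else 0) * t) = (\<Sum>t\<in>T. c t * t)"
proof -
  have "(\<Sum>t\<in>U. (if t \<in> T then c t else 0) * t) = (\<Sum>t\<in>U. if t \<in> T then c t * t else 0)"
    by (rule sum.cong) auto
  also have "\<dots> = (\<Sum>t\<in>U \<inter> T. c t * t)" using assms(1) by (simp add: sum.inter_restrict)
  also have "U \<inter> T = T" using assms(2) by auto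
  finally show ?thesis .
qed

lemma span_finite:
  assumes K: "subfield K" and S: "finite S"
  shows "x \<in> span_over K S \<longleftrightarrow> (\<exists>c. (\<forall>s\<in>S. c s \<in> K) \<and> x = (\<Sum>s\<in>S. c s * s))"
proof
  assume "x \<in> span_over K S"
  then obtain T c where T: "finite T" "T \<subseteq> S" "\<forall>t\<in>T. c t \<in> K" "x = (\<Sum>t\<in>T. c t * t)"
    unfolding span_over_def by auto
  show "\<exists>c. (\<forall>s\<in>S. c s \<in> K) \<and> x = (\<Sum>s\<in>S. c s * s)"
    by (rule exI[of _ "\<lambda>t. if t \<in> T then c t else 0"])
      (use T sfD[OF K] sum_if_restrict[OF S T(2), of c] in auto)
next
  assume "\<exists>c. (\<forall>s\<in>S. c s \<in> K) \<and> x = (\<Sum>s\<in>S. c s * s)"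
  then obtain c where "\<forall>s\<in>S. c s \<in> K" "x = (\<Sum>s\<in>S. c s * s)" by blast
  then show "x \<in> span_over K S" unfolding span_over_def
    by (intro CollectI exI[of _ S] exI[of _ c]) (use S in blast)
qed

lemma span_zero: "subfield K \<Longrightarrow> 0 \<in> span_over K S"
  unfolding span_over_def by (rule CollectI, rule exI[of _ "{}"], rule exI[of _ "\<lambda>_. 0"]) simp

lemma span_base: "subfield K \<Longrightarrow> s \<in> S \<Longrightarrow> s \<in> span_over K S"
  unfolding span_over_def
  by (rule CollectI, rule exI[of _ "{s}"], rule exI[of _ "\<lambda>_. 1"]) (simp add: sfD(2))

lemma span_add:
  assumes K: "subfield K" and x: "x \<in> span_over K S" and y: "y \<in> span_over K S"
  shows "x + y \<in> span_over K S"
proof -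
  obtain T1 c1 where T1: "finite T1" "T1 \<subseteq> S" "\<forall>t\<in>T1. c1 t \<in> K" "x = (\<Sum>t\<in>T1. c1 t * t)"
    using x unfolding span_over_def by auto
  obtain T2 c2 where T2: "finite T2" "T2 \<subseteq> S" "\<forall>t\<in>T2. c2 t \<in> K" "y = (\<Sum>t\<in>T2. c2 t * t)"
    using y unfolding span_over_def by auto
  define U where "U = T1 \<union> T2"
  define c where "c t = (if t \<in> T1 then c1 t else 0) + (if t \<in> T2 then c2 t else 0)" for t
  have fU: "finite U" using T1 T2 unfolding U_def by auto
  have sU: "U \<subseteq> S" using T1 T2 unfolding U_def by auto
  have "(\<Sum>t\<in>U. c t * t) = (\<Sum>t\<in>U. (if t \<in> T1 then c1 t else 0) * t + (if t \<in> T2 then c2 t else 0) * t)"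
    unfolding c_def by (rule sum.cong, rule refl, rule distrib_right)
  also have "\<dots> = (\<Sum>t\<in>U. (if t \<in> T1 then c1 t else 0) * t) + (\<Sum>t\<in>U. (if t \<in> T2 then c2 t else 0) * t)"
    by (rule sum.distrib)
  also have "(\<Sum>t\<in>U. (if t \<in> T1 then c1 t else 0) * t) = x"
    unfolding T1(4) by (rule sum_if_restrict[OF fU]) (simp add: U_def)
  also have "(\<Sum>t\<in>U. (if t \<in> T2 then c2 t else 0) * t) = y"
    unfolding T2(4) by (rule sum_if_restrict[OF fU]) (simp add: U_def)
  finally have eq: "x + y = (\<Sum>t\<in>U. c t * t)" by simp
  have cK: "\<forall>t\<in>U. c t \<in> K"
  proof
    fix t assume "t \<in> U"
    have "(if t \<in> T1 then c1 t else 0) \<in> K" using T1(3) sfD(1)[OF K] by simp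
    moreover have "(if t \<in> T2 then c2 t else 0) \<in> K" using T2(3) sfD(1)[OF K] by simp
    ultimately show "c t \<in> K" unfolding c_def by (rule sfD(3)[OF K])
  qed
  show ?thesis unfolding span_over_def
    by (rule CollectI, rule exI[of _ U], rule exI[of _ c]) (use fU sU cK eq in blast)
qed

lemma span_smult:
  assumes K: "subfield K" and a: "a \<in> K" and x: "x \<in> span_over K S"
  shows "a * x \<in> span_over K S"
proof -
  obtain T c where T: "finite T" "T \<subseteq> S" "\<forall>t\<in>T. c t \<in> K" "x = (\<Sum>t\<in>T. c t * t)"
    using x unfolding span_over_def by auto
  have "a * x = (\<Sum>t\<in>T. (a * c t) * t)" using T(4) by (simp add: sum_distrib_left mult.assoc)
  moreover have "\<forall>t\<in>T. a * c t \<in> K" using T a sfD(4)[OF K] by blast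
  ultimately show ?thesis unfolding span_over_def
    by (intro CollectI exI[of _ T] exI[of _ "\<lambda>t. a * c t"]) (use T in blast)
qed

lemma span_uminus: "subfield K \<Longrightarrow> x \<in> span_over K S \<Longrightarrow> - x \<in> span_over K S"
  using span_smult[of K "-1" x S] sfD(2,5)[of K] by auto

lemma span_diff: "subfield K \<Longrightarrow> x \<in> span_over K S \<Longrightarrow> y \<in> span_over K S \<Longrightarrow> x - y \<in> span_over K S"
  using span_add[of K x S "-y"] span_uminus[of K y S] by auto

lemma span_sum:
  assumes K: "subfield K" and "\<And>t. t \<in> T \<Longrightarrow> f t \<in> span_over K S"
  shows "sum f T \<in> span_over K S"
  using assms(2)
proof (induction T rule: infinite_finite_induct)
  case (insert x F) then show ?case using span_add[OF K] by simp
qed (simp_all add: span_zero[OF K])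

lemma span_mono:
  assumes K: "subfield K" and sub: "S \<subseteq> span_over K T"
  shows "span_over K S \<subseteq> span_over K T"
proof
  fix x assume "x \<in> span_over K S"
  then obtain U c where U: "finite U" "U \<subseteq> S" "\<forall>t\<in>U. c t \<in> K" "x = (\<Sum>t\<in>U. c t * t)"
    unfolding span_over_def by auto
  show "x \<in> span_over K T" unfolding U(4)
    by (rule span_sum[OF K], rule span_smult[OF K]) (use U sub in auto)
qed

lemma span_subset: "S \<subseteq> T \<Longrightarrow> span_over K S \<subseteq> span_over K T"
  unfolding span_over_def by blast

lemma span_mult:
  assumes K: "subfield K" and x: "x \<in> span_over K S1" and y: "y \<in> span_over K S2"
  shows "x * y \<in> span_over K {s * t | s t. s \<in> S1 \<and> t \<in> S2}"
proof -
  let ?P = "{s * t | s t. s \<in> S1 \<and> t \<in> S2}"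
  obtain T1 c1 where T1: "finite T1" "T1 \<subseteq> S1" "\<forall>t\<in>T1. c1 t \<in> K" "x = (\<Sum>t\<in>T1. c1 t * t)"
    using x unfolding span_over_def by auto
  obtain T2 c2 where T2: "finite T2" "T2 \<subseteq> S2" "\<forall>t\<in>T2. c2 t \<in> K" "y = (\<Sum>t\<in>T2. c2 t * t)"
    using y unfolding span_over_def by auto
  have "x * y = (\<Sum>s\<in>T1. c1 s * s * y)" by (simp add: T1(4) sum_distrib_right)
  also have "\<dots> = (\<Sum>s\<in>T1. c1 s * (\<Sum>t\<in>T2. c2 t * (s * t)))"
    by (rule sum.cong) (simp_all add: T2(4) sum_distrib_left mult_ac)
  also have "\<dots> \<in> span_over K ?P"
  proof (rule span_sum[OF K], rule span_smult[OF K])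
    fix s assume s: "s \<in> T1"
    show "c1 s \<in> K" using s T1 by auto
    show "(\<Sum>t\<in>T2. c2 t * (s * t)) \<in> span_over K ?P"
      by (rule span_sum[OF K], rule span_smult[OF K], use T2 in simp, rule span_base[OF K])
         (use s T1 T2 in blast)
  qed
  finally show ?thesis .
qed

lemma indep_subset: "lin_indep_over K T \<Longrightarrow> U \<subseteq> T \<Longrightarrow> lin_indep_over K U"
  unfolding lin_indep_over_def by blast

lemma indep_insert:
  assumes K: "subfield K" and B: "lin_indep_over K B" and s: "s \<notin> span_over K B"
  shows "lin_indep_over K (insert s B)"
  unfolding lin_indep_over_def
proof (intro allI impI)
  fix U c assume H: "finite U \<and> U \<subseteq> insert s B \<and> (\<forall>t\<in>U. c t \<in> K) \<and> (\<Sum>t\<in>U. c t * t) = 0"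
  show "\<forall>t\<in>U. c t = 0"
  proof (cases "s \<in> U")
    case False
    then show ?thesis using B H unfolding lin_indep_over_def by blast
  next
    case True
    have sB: "s \<notin> B" using s span_base[OF K] by blast
    have U': "finite (U - {s})" "U - {s} \<subseteq> B" using H sB by auto
    have "(\<Sum>t\<in>U. c t * t) = c s * s + (\<Sum>t\<in>U - {s}. c t * t)"
      by (rule sum.remove) (use H True in auto)
    then have eq: "c s * s + (\<Sum>t\<in>U - {s}. c t * t) = 0" using H by simp
    have cs: "c s = 0"
    proof (rule ccontr)
      assume "c s \<noteq> 0"
      then have "s = (- inverse (c s)) * (\<Sum>t\<in>U - {s}. c t * t)"
        using eq by (metis add_eq_0_iff2 mult.assoc mult_1 mult_minus_left nonzero_divide_eq_eq divide_inverse_commute mult.commute)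
      moreover have "(\<Sum>t\<in>U - {s}. c t * t) \<in> span_over K B"
        unfolding span_over_def by (intro CollectI exI[of _ "U - {s}"] exI[of _ c]) (use U' H in blast)
      moreover have "- inverse (c s) \<in> K" using H True sfD[OF K] by auto
      ultimately show False using s span_smult[OF K] by metis
    qed
    then have "(\<Sum>t\<in>U - {s}. c t * t) = 0" using eq by simp
    then have "\<forall>t\<in>U - {s}. c t = 0" using B U' H unfolding lin_indep_over_def by blast
    then show ?thesis using cs by blast
  qed
qed

lemma basis_exists:
  assumes K: "subfield K" and S: "finite S"
  shows "\<exists>B \<subseteq> S. lin_indep_over K B \<and> span_over K B = span_over K S"
  using S
proof (induction S rule: finite_induct)
  case empty
  then show ?case by (intro exI[of _ "{}"]) (auto simp: lin_indep_over_def)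
next
  case (insert s S)
  then obtain B where B: "B \<subseteq> S" "lin_indep_over K B" "span_over K B = span_over K S" by auto
  show ?case
  proof (cases "s \<in> span_over K S")
    case True
    have "span_over K (insert s S) \<subseteq> span_over K S"
      by (rule span_mono[OF K]) (use True span_base[OF K] in auto)
    then show ?thesis using B span_subset[of S "insert s S" K] by (intro exI[of _ B]) auto
  next
    case False
    have 1: "span_over K (insert s B) \<subseteq> span_over K (insert s S)"
      using B(1) span_subset by (metis insert_mono)
    have "span_over K (insert s S) \<subseteq> span_over K (insert s B)"
    proof (rule span_mono[OF K])
      show "insert s S \<subseteq> span_over K (insert s B)"
      proof
        fix x assume "x \<in> insert s S"
        then show "x \<in> span_over K (insert s B)"
        proof
          assume "x = s" then show ?thesis using span_base[OF K] by auto
        next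
          assume "x \<in> S"
          then have "x \<in> span_over K B" using B(3) span_base[OF K] by auto
          then show ?thesis using span_subset[of B "insert s B" K] by auto
        qed
      qed
    qed
    then show ?thesis using 1 B indep_insert[OF K B(2)] False
      by (intro exI[of _ "insert s B"]) auto
  qed
qed

lemma span_insert_decomp:
  assumes K: "subfield K" and S: "finite S" and s: "s \<notin> S"
    and x: "x \<in> span_over K (insert s S)"
  shows "\<exists>a\<in>K. x - a * s \<in> span_over K S"
proof -
  have fin: "finite (insert s S)" using S by simp
  obtain c where c: "\<forall>u\<in>insert s S. c u \<in> K" "x = (\<Sum>u\<in>insert s S. c u * u)"
    using x unfolding span_finite[OF K fin] by blast
  have "x = c s * s + (\<Sum>u\<in>S. c u * u)" using c(2) S s by simp
  then have "x - c s * s = (\<Sum>u\<in>S. c u * u)" by simp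
  moreover have "(\<Sum>u\<in>S. c u * u) \<in> span_over K S"
    by (rule iffD2[OF span_finite[OF K S]], rule exI[of _ c]) (use c(1) in simp)
  ultimately show ?thesis using c(1) by (intro bexI[of _ "c s"]) auto
qed

lemma indep_zero:
  assumes ind: "lin_indep_over K T" and K: "subfield K"
  shows "0 \<notin> T"
proof
  assume z: "0 \<in> T"
  have "finite {0::complex} \<and> {0} \<subseteq> T \<and> (\<forall>t\<in>{0}. (\<lambda>_. 1::complex) t \<in> K) \<and> (\<Sum>t\<in>{0}. (\<lambda>_. 1::complex) t * t) = 0"
    using z sfD(2)[OF K] by simp
  then have "\<forall>t\<in>{0}. (\<lambda>_. 1::complex) t = 0"
    using ind[unfolded lin_indep_over_def, rule_format, of "{0}" "\<lambda>_. 1"] by blast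
  then show False by simp
qed

lemma indepD:
  assumes "lin_indep_over K T" "finite U" "U \<subseteq> T" "\<And>t. t \<in> U \<Longrightarrow> c t \<in> K"
    "(\<Sum>t\<in>U. c t * t) = 0" "t \<in> U"
  shows "c t = 0"
proof -
  have "finite U \<and> U \<subseteq> T \<and> (\<forall>t\<in>U. c t \<in> K) \<and> (\<Sum>t\<in>U. c t * t) = 0"
    using assms(2-5) by blast
  then have "\<forall>t\<in>U. c t = 0" using assms(1)[unfolded lin_indep_over_def, rule_format, of U c] by blast
  then show ?thesis using assms(6) by blast
qed

lemma span_empty: "span_over K {} = {0}"
  unfolding span_over_def by auto

lemma steinitz:
  assumes K: "subfield K" and S: "finite S"
  shows "finite T \<Longrightarrow> T \<subseteq> span_over K S \<Longrightarrow> lin_indep_over K T \<Longrightarrow> card T \<le> card S"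
  using S
proof (induction S arbitrary: T rule: finite_induct)
  case empty
  then have "T \<subseteq> {0}" using span_empty by auto
  then have "T = {}" using indep_zero[OF empty(3) K] by auto
  then show ?case by simp
next
  case (insert s S T)
  have "\<forall>t\<in>T. \<exists>a\<in>K. t - a * s \<in> span_over K S"
    using span_insert_decomp[OF K insert(1,2)] insert.prems(2) by blast
  then obtain a where a0: "\<forall>t\<in>T. a t \<in> K \<and> t - a t * s \<in> span_over K S"
    using bchoice[of T "\<lambda>t a. a \<in> K \<and> t - a * s \<in> span_over K S"] by blast
  then have a: "\<And>t. t \<in> T \<Longrightarrow> a t \<in> K" "\<And>t. t \<in> T \<Longrightarrow> t - a t * s \<in> span_over K S"
    by auto
  show ?case
  proof (cases "\<forall>t\<in>T. a t = 0")
    case True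
    then have "T \<subseteq> span_over K S" using a(2) by auto
    then have "card T \<le> card S" using insert.IH insert.prems(1,3) by blast
    then show ?thesis using insert(1,2) by simp
  next
    case False
    then obtain t0 where t0: "t0 \<in> T" "a t0 \<noteq> 0" by blast
    define f where "f t = t - (a t / a t0) * t0" for t
    define T' where "T' = T - {t0}"
    have fT': "finite T'" using insert.prems(1) unfolding T'_def by auto
    have indT: "lin_indep_over K T" by fact
    have fspan: "f t \<in> span_over K S" if "t \<in> T" for t
    proof -
      have "f t = (t - a t * s) - (a t / a t0) * (t0 - a t0 * s)"
        unfolding f_def using t0(2) by (simp add: field_simps)
      also have "\<dots> \<in> span_over K S"
        by (rule span_diff[OF K], rule a(2)[OF that], rule span_smult[OF K],
            rule sf_div[OF K a(1)[OF that] a(1)[OF t0(1)]], rule a(2)[OF t0(1)])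
      finally show ?thesis .
    qed
    have inj: "inj_on f T'"
    proof
      fix t1 t2 assume t1: "t1 \<in> T'" and t2: "t2 \<in> T'" and eq: "f t1 = f t2"
      show "t1 = t2"
      proof (rule ccontr)
        assume ne: "t1 \<noteq> t2"
        have d: "t1 \<noteq> t0" "t2 \<noteq> t0" using t1 t2 unfolding T'_def by auto
        define e where "e t = (if t = t1 then 1 else if t = t2 then -1 else (a t2 - a t1) / a t0)" for t
        have sub: "{t1, t2, t0} \<subseteq> T" using t1 t2 t0 unfolding T'_def by auto
        have eK: "\<forall>t\<in>{t1, t2, t0}. e t \<in> K"
        proof -
          have k1: "(1::complex) \<in> K" "(-1::complex) \<in> K" using sfD(2,5)[OF K] by auto
          have k3: "(a t2 - a t1) / a t0 \<in> K"
            using sf_div[OF K sf_diff[OF K a(1) a(1)] a(1)] sub by auto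
          show ?thesis using k1 k3 ne d unfolding e_def by simp
        qed
        have "(\<Sum>t\<in>{t1, t2, t0}. e t * t) = t1 - t2 + ((a t2 - a t1) / a t0) * t0"
          using ne d unfolding e_def by simp
        also have "\<dots> = f t1 - f t2" unfolding f_def using t0(2) by (simp add: field_simps)
        also have "\<dots> = 0" using eq by simp
        finally have "(\<Sum>t\<in>{t1, t2, t0}. e t * t) = 0" .
        then have "e t1 = 0" using indepD[OF indT _ sub, of e t1] eK by auto
        then show False unfolding e_def by simp
      qed
    qed
    have indf: "lin_indep_over K (f ` T')"
      unfolding lin_indep_over_def
    proof (intro allI impI)
      fix U c assume H: "finite U \<and> U \<subseteq> f ` T' \<and> (\<forall>t\<in>U. c t \<in> K) \<and> (\<Sum>t\<in>U. c t * t) = 0"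
      define U' where "U' = {t \<in> T'. f t \<in> U}"
      have U'sub: "U' \<subseteq> T'" unfolding U'_def by auto
      have fU': "finite U'" using fT' U'sub finite_subset by blast
      have imgU: "f ` U' = U" using H unfolding U'_def by auto
      have injU: "inj_on f U'" using inj U'sub inj_on_subset by blast
      have t0U: "t0 \<notin> U'" using U'sub unfolding T'_def by auto
      define g where "g t = c (f t)" for t
      define m where "m = (\<Sum>t\<in>U'. g t * a t / a t0)"
      define e where "e t = (if t = t0 then - m else g t)" for t
      have "(\<Sum>t\<in>U. c t * t) = (\<Sum>t\<in>U'. g t * f t)"
        unfolding imgU[symmetric] g_def by (rule sum.reindex_cong[OF injU refl]) simp
      also have "\<dots> = (\<Sum>t\<in>U'. g t * t - (g t * a t / a t0) * t0)"
        by (rule sum.cong) (simp_all add: f_def right_diff_distrib)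
      also have "\<dots> = (\<Sum>t\<in>U'. g t * t) - m * t0"
        unfolding m_def by (simp add: sum_subtractf sum_distrib_right)
      also have "\<dots> = (\<Sum>t\<in>insert t0 U'. e t * t)"
      proof -
        have "(\<Sum>t\<in>insert t0 U'. e t * t) = e t0 * t0 + (\<Sum>t\<in>U'. e t * t)"
          using fU' t0U by simp
        also have "(\<Sum>t\<in>U'. e t * t) = (\<Sum>t\<in>U'. g t * t)"
          by (rule sum.cong) (use t0U in \<open>auto simp: e_def\<close>)
        finally show ?thesis unfolding e_def by simp
      qed
      finally have sum0: "(\<Sum>t\<in>insert t0 U'. e t * t) = 0" using H by simp
      have eK: "\<forall>t\<in>insert t0 U'. e t \<in> K"
      proof
        fix t assume t: "t \<in> insert t0 U'"
        have gK: "g u \<in> K" if "u \<in> U'" for u using H that unfolding g_def U'_def by auto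
        have "m \<in> K" unfolding m_def
          by (rule sf_sum[OF K], rule sf_div[OF K], rule sfD(4)[OF K])
             (use gK a(1) t0 U'sub T'_def in auto)
        then show "e t \<in> K" using t gK sfD(5)[OF K] unfolding e_def by auto
      qed
      have sub2: "insert t0 U' \<subseteq> T" using U'sub t0 unfolding T'_def by auto
      have "\<forall>t\<in>insert t0 U'. e t = 0"
        using indepD[OF indT _ sub2 _ sum0] fU' eK by blast
      then have "\<forall>t\<in>U'. g t = 0"
      proof (intro ballI)
        fix t assume e0: "\<forall>t\<in>insert t0 U'. e t = 0" and t: "t \<in> U'"
        then have "e t = 0" by blast
        moreover have "t \<noteq> t0" using t t0U by blast
        ultimately show "g t = 0" unfolding e_def by simp
      qed
      then show "\<forall>t\<in>U. c t = 0" unfolding imgU[symmetric] g_def by auto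
    qed
    have "f ` T' \<subseteq> span_over K S" using fspan unfolding T'_def by auto
    then have "card (f ` T') \<le> card S" using insert.IH indf fT' by blast
    moreover have "card (f ` T') = card T'" using card_image[OF inj] .
    moreover have "card T' = card T - 1" unfolding T'_def using t0 by simp
    moreover have "card T > 0" using t0 insert.prems(1) card_gt_0_iff by blast
    ultimately show ?thesis using insert(1,2) by simp
  qed
qed

lemma pow_span:
  fixes p :: "complex poly"
  assumes K: "subfield K" and pK: "\<And>i. coeff p i \<in> K" and dg: "degree p = d"
    and mon: "coeff p d = 1" and root: "poly p x = 0"
  shows "x ^ j \<in> span_over K {x ^ i | i. i < d}"
proof (induction j rule: less_induct)
  case (less j)
  let ?P = "{x ^ i | i. i < d}"
  show ?case
  proof (cases "j < d")
    case True
    then show ?thesis by (intro span_base[OF K]) blast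
  next
    case False
    have "0 = (\<Sum>i\<le>d. coeff p i * x ^ i)" using root unfolding poly_altdef dg by simp
    also have "\<dots> = (\<Sum>i<d. coeff p i * x ^ i) + x ^ d"
      using mon by (simp add: lessThan_Suc_atMost[symmetric])
    finally have xd: "x ^ d = - (\<Sum>i<d. coeff p i * x ^ i)" by (simp add: eq_neg_iff_add_eq_0 add.commute)
    have "x ^ j = x ^ (j - d) * x ^ d" using False by (simp add: power_add[symmetric])
    also have "\<dots> = - (\<Sum>i<d. coeff p i * x ^ (i + (j - d)))"
      unfolding xd by (simp add: sum_distrib_left power_add mult_ac)
    also have "\<dots> \<in> span_over K ?P"
    proof (rule span_uminus[OF K], rule span_sum[OF K], rule span_smult[OF K])
      fix i assume i: "i \<in> {..<d}"
      show "coeff p i \<in> K" by (rule pK)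
      show "x ^ (i + (j - d)) \<in> span_over K ?P"
        by (rule less.IH) (use i False in auto)
    qed
    finally show ?thesis .
  qed
qed

lemma inv_from_rel:
  fixes x :: complex
  assumes K: "subfield K" and x0: "x \<noteq> 0" and eK: "\<And>i. e i \<in> K"
    and rel: "(\<Sum>i\<le>D. e i * x ^ i) = 0" and nz: "i1 \<le> D" "e i1 \<noteq> 0"
    and pw: "\<And>i. x ^ i \<in> span_over K S"
  shows "inverse x \<in> span_over K S"
proof -
  define i0 where "i0 = (LEAST i. i \<le> D \<and> e i \<noteq> 0)"
  have i0: "i0 \<le> D" "e i0 \<noteq> 0" using LeastI[of "\<lambda>i. i \<le> D \<and> e i \<noteq> 0" i1] nz unfolding i0_def by auto
  have below: "e i = 0" if "i < i0" for i
    using not_less_Least[of i "\<lambda>i. i \<le> D \<and> e i \<noteq> 0"] that i0 unfolding i0_def by auto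
  define R where "R = (\<Sum>i\<in>{i0<..D}. e i * x ^ (i - i0 - 1))"
  have "(\<Sum>i\<le>D. e i * x ^ i) = (\<Sum>i\<in>{i0..D}. e i * x ^ i)"
    by (rule sum.mono_neutral_right) (use below in auto)
  also have "{i0..D} = insert i0 {i0<..D}" using i0 by auto
  also have "(\<Sum>i\<in>insert i0 {i0<..D}. e i * x ^ i) = e i0 * x ^ i0 + (\<Sum>i\<in>{i0<..D}. e i * x ^ i)"
    by simp
  also have "(\<Sum>i\<in>{i0<..D}. e i * x ^ i) = x ^ i0 * x * R"
    unfolding R_def sum_distrib_left
  proof (rule sum.cong)
    fix i assume "i \<in> {i0<..D}"
    then have "i = i0 + 1 + (i - i0 - 1)" by auto
    then have "x ^ i = x ^ i0 * x * x ^ (i - i0 - 1)" by (metis power_add power_one_right)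
    then show "e i * x ^ i = x ^ i0 * x * (e i * x ^ (i - i0 - 1))" by simp
  qed simp
  finally have "x ^ i0 * (e i0 + x * R) = 0" using rel by (simp add: algebra_simps)
  then have "e i0 + x * R = 0" using x0 by simp
  then have "inverse x = (- inverse (e i0)) * R"
    using i0(2) x0 by (simp add: field_simps eq_neg_iff_add_eq_0 add.commute)
  also have "\<dots> \<in> span_over K S"
    unfolding R_def
    by (rule span_smult[OF K], rule sfD(5)[OF K], rule sfD(6)[OF K], rule eK,
        rule span_sum[OF K], rule span_smult[OF K], rule eK, rule pw)
  finally show ?thesis .
qed

lemma root_unity_lemma:
  fixes p :: "complex poly" and l m :: complex
  assumes K: "subfield K" and pK: "\<And>i. coeff p i \<in> K" and dg: "degree p = d"
    and mon: "coeff p d = 1" and rl: "poly p l = 0" and rm: "poly p m = 0" and m0: "m \<noteq> 0"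
    and M: "M > 0" and eq: "l ^ M = m ^ M"
    and H: "\<forall>L. finite_ext K L \<and> ext_degree K L \<le> d ^ 2 \<longrightarrow>
            (\<forall>z\<in>L. root_of_unity z \<longrightarrow> z ^ N0 = 1)"
  shows "l ^ N0 = m ^ N0"
proof -
  have d0: "d > 0"
  proof (rule ccontr)
    assume "\<not> d > 0"
    then have "d = 0" by simp
    then have "p = [:1:]" using dg mon by (metis One_nat_def coeff_pCons_0 degree_0_id pCons_one)
    then show False using rl by simp
  qed
  define P1 where "P1 = {l ^ i | i. i < d}"
  define P2 where "P2 = {m ^ i | i. i < d}"
  define S where "S = {s * t | s t. s \<in> P1 \<and> t \<in> P2}"
  define L where "L = span_over K S"
  have Simg: "S = (\<lambda>(i, j). l ^ i * m ^ j) ` ({..<d} \<times> {..<d})"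
    unfolding S_def P1_def P2_def by auto
  have finS: "finite S" unfolding Simg by simp
  have cardS: "card S \<le> d ^ 2"
  proof -
    have "card S \<le> card ({..<d} \<times> {..<d})" unfolding Simg by (rule card_image_le) simp
    also have "\<dots> = d ^ 2" by (simp add: card_cartesian_product power2_eq_square)
    finally show ?thesis .
  qed
  have ab: "l ^ a * m ^ b \<in> L" for a b
    unfolding L_def S_def
    by (rule span_mult[OF K]) (unfold P1_def P2_def, rule pow_span[OF K pK dg mon rl],
        rule pow_span[OF K pK dg mon rm])
  have mulL: "x * y \<in> L" if x: "x \<in> L" and y: "y \<in> L" for x y
  proof -
    have "x * y \<in> span_over K {s * t | s t. s \<in> S \<and> t \<in> S}"
      using span_mult[OF K, of x S y S] x y unfolding L_def by blast
    also have "\<dots> \<subseteq> L" unfolding L_def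
    proof (rule span_mono[OF K], safe)
      fix s t assume s: "s \<in> S" and t: "t \<in> S"
      obtain i j where s': "s = l ^ i * m ^ j" using s unfolding Simg by auto
      obtain i' j' where t': "t = l ^ i' * m ^ j'" using t unfolding Simg by auto
      have "s * t = l ^ (i + i') * m ^ (j + j')" unfolding s' t' by (simp add: power_add mult_ac)
      then show "s * t \<in> span_over K S" using ab unfolding L_def by simp
    qed
    finally show ?thesis .
  qed
  have oneL: "1 \<in> L" using ab[of 0 0] by simp
  have KL: "a \<in> L" if "a \<in> K" for a
    using span_smult[OF K that oneL[unfolded L_def]] unfolding L_def by simp
  have powL: "x ^ i \<in> L" if "x \<in> L" for x i
    by (induction i) (use oneL mulL that in auto)
  have invL: "inverse x \<in> L" if x: "x \<in> L" and x0: "x \<noteq> 0" for x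
  proof (cases "inj_on (\<lambda>i. x ^ i) {..card S}")
    case True
    define X where "X = (\<lambda>i. x ^ i) ` {..card S}"
    have cX: "card X = card S + 1" unfolding X_def using card_image[OF True] by simp
    have fX: "finite X" unfolding X_def by simp
    have XL: "X \<subseteq> span_over K S" unfolding X_def using powL[OF x] unfolding L_def by auto
    have "\<not> lin_indep_over K X"
    proof
      assume "lin_indep_over K X"
      then have "card X \<le> card S" using steinitz[OF K finS fX XL] by blast
      then show False using cX by simp
    qed
    then have "\<exists>U c. finite U \<and> U \<subseteq> X \<and> (\<forall>t\<in>U. c t \<in> K) \<and>
      (\<Sum>t\<in>U. c t * t) = 0 \<and> (\<exists>u\<in>U. c u \<noteq> 0)"
      unfolding lin_indep_over_def by blast
    then obtain U c u where U: "finite U" "U \<subseteq> X" "\<forall>t\<in>U. c t \<in> K"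
      "(\<Sum>t\<in>U. c t * t) = 0" and u: "u \<in> U" "c u \<noteq> 0"
      by blast
    define e where "e i = (if x ^ i \<in> U then c (x ^ i) else 0)" for i
    have eK: "e i \<in> K" for i unfolding e_def using U(3) sfD(1)[OF K] by simp
    have "(\<Sum>i\<le>card S. e i * x ^ i) = (\<Sum>t\<in>X. (if t \<in> U then c t else 0) * t)"
      unfolding X_def e_def by (simp add: sum.reindex[OF True])
    also have "\<dots> = (\<Sum>t\<in>U. c t * t)" by (rule sum_if_restrict[OF fX U(2)])
    finally have rel: "(\<Sum>i\<le>card S. e i * x ^ i) = 0" using U(4) by simp
    obtain i1 where i1: "i1 \<le> card S" "u = x ^ i1" using u(1) U(2) unfolding X_def by auto
    have ei1: "e i1 \<noteq> 0" unfolding e_def using i1 u by simp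
    show ?thesis unfolding L_def
      by (rule inv_from_rel[OF K x0 eK rel i1(1) ei1]) (use powL[OF x] in \<open>simp add: L_def\<close>)
  next
    case False
    then obtain i j where ij: "i \<le> card S" "j \<le> card S" "i \<noteq> j" "x ^ i = x ^ j"
      unfolding inj_on_def by auto
    have "\<exists>k. x ^ Suc k = 1"
    proof (cases "i < j")
      case True
      have "x ^ j = x ^ i * x ^ (j - i)" using True by (simp add: power_add[symmetric])
      then have "x ^ (j - i) = 1" using ij(4) x0 by simp
      moreover have "j - i = Suc (j - i - 1)" using True by simp
      ultimately show ?thesis by metis
    next
      case False
      then have ji: "j < i" using ij(3) by simp
      have "x ^ i = x ^ j * x ^ (i - j)" using ji by (simp add: power_add[symmetric])
      then have "x ^ (i - j) = 1" using ij(4) x0 by simp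
      moreover have "i - j = Suc (i - j - 1)" using ji by simp
      ultimately show ?thesis by metis
    qed
    then obtain k where k: "x ^ Suc k = 1" by blast
    then have "inverse x = x ^ k" using x0 by (simp add: field_simps)
    then show ?thesis using powL[OF x] by simp
  qed
  have sfL: "subfield L" unfolding subfield_def
  proof (intro conjI ballI impI)
    show "0 \<in> L" unfolding L_def by (rule span_zero[OF K])
    show "1 \<in> L" by (rule oneL)
    fix x assume x: "x \<in> L"
    show "- x \<in> L" using span_uminus[OF K x[unfolded L_def]] unfolding L_def .
    show "x \<noteq> 0 \<Longrightarrow> inverse x \<in> L" by (rule invL[OF x])
    fix y assume y: "y \<in> L"
    show "x + y \<in> L" using span_add[OF K x[unfolded L_def] y[unfolded L_def]] unfolding L_def .
    show "x * y \<in> L" by (rule mulL[OF x y])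
  qed
  have KsubL: "K \<subseteq> L" using KL by blast
  obtain B where B: "B \<subseteq> S" "lin_indep_over K B" "span_over K B = span_over K S"
    using basis_exists[OF K finS] by blast
  have SL: "S \<subseteq> L" unfolding L_def using span_base[OF K] by blast
  have ex: "\<exists>B. finite B \<and> is_basis_over K L B"
  proof (intro exI[of _ B] conjI)
    show "finite B" by (rule finite_subset[OF B(1) finS])
    show "is_basis_over K L B" unfolding is_basis_over_def
      using B SL unfolding L_def by auto
  qed
  have fe: "finite_ext K L" unfolding finite_ext_def using K sfL KsubL ex by blast
  define B0 where "B0 = (SOME B. finite B \<and> is_basis_over K L B)"
  have B0: "finite B0 \<and> is_basis_over K L B0" unfolding B0_def by (rule someI_ex[OF ex])
  have "card B0 \<le> card S"
    by (rule steinitz[OF K finS]) (use B0 in \<open>auto simp: is_basis_over_def L_def\<close>)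
  then have deg: "ext_degree K L \<le> d ^ 2" unfolding ext_degree_def B0_def[symmetric] using cardS by simp
  have mL: "m \<in> L" using ab[of 0 1] by simp
  have lL: "l \<in> L" using ab[of 1 0] by simp
  define z where "z = l * inverse m"
  have zL: "z \<in> L" unfolding z_def by (rule mulL[OF lL invL[OF mL m0]])
  have "z ^ M = 1" unfolding z_def using eq m0 by (simp add: power_mult_distrib power_inverse)
  then have "root_of_unity z" unfolding root_of_unity_def using M by blast
  then have "z ^ N0 = 1" using H fe deg zL by blast
  then show ?thesis unfolding z_def using m0 by (simp add: power_mult_distrib power_inverse field_simps)
qed

lemma indep_one: "subfield K \<Longrightarrow> lin_indep_over K {1}"
  unfolding lin_indep_over_def
proof (intro allI impI ballI)
  fix T c t assume H: "finite T \<and> T \<subseteq> {1::complex} \<and> (\<forall>t\<in>T. c t \<in> K) \<and> (\<Sum>t\<in>T. c t * t) = 0"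
    and t: "t \<in> T"
  then have "T = {1}" by auto
  then show "c t = 0" using H t by simp
qed

lemma maximal_indep:
  assumes K: "subfield K"
  shows "\<exists>H. 1 \<in> H \<and> lin_indep_over K H \<and> (\<forall>x. x \<in> span_over K H)"
proof -
  define A where "A = {H. (1::complex) \<in> H \<and> lin_indep_over K H}"
  have "\<exists>M\<in>A. \<forall>X\<in>A. M \<subseteq> X \<longrightarrow> X = M"
  proof (rule subset_Zorn_nonempty)
    show "A \<noteq> {}" unfolding A_def using indep_one[OF K] by blast
  next
    fix C assume C: "C \<noteq> {}" "subset.chain A C"
    have CA: "C \<subseteq> A" using C(2) unfolding subset_chain_def by blast
    have "1 \<in> \<Union>C" using C CA unfolding A_def by blast
    moreover have "lin_indep_over K (\<Union>C)"
      unfolding lin_indep_over_def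
    proof (intro allI impI)
      fix T c assume H: "finite T \<and> T \<subseteq> \<Union>C \<and> (\<forall>t\<in>T. c t \<in> K) \<and> (\<Sum>t\<in>T. c t * t) = 0"
      obtain B where B: "B \<in> C" "T \<subseteq> B"
        using finite_subset_Union_chain[of T C A] H C by blast
      have "lin_indep_over K B" using B(1) CA unfolding A_def by blast
      then show "\<forall>t\<in>T. c t = 0" using H B(2) unfolding lin_indep_over_def by blast
    qed
    ultimately show "\<Union>C \<in> A" unfolding A_def by blast
  qed
  then obtain H where H: "H \<in> A" and max: "\<And>X. X \<in> A \<Longrightarrow> H \<subseteq> X \<Longrightarrow> X = H" by blast
  have "x \<in> span_over K H" for x
  proof (rule ccontr)
    assume nx: "x \<notin> span_over K H"
    have "insert x H \<in> A" using H indep_insert[OF K _ nx] unfolding A_def by blast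
    then have "insert x H = H" using max by blast
    then have "x \<in> H" by blast
    then show False using nx span_base[OF K] by blast
  qed
  then show ?thesis using H unfolding A_def by blast
qed

definition coord :: "complex set \<Rightarrow> complex set \<Rightarrow> complex \<Rightarrow> complex \<Rightarrow> bool" where
  "coord K H x a \<longleftrightarrow> (\<exists>T c. finite T \<and> T \<subseteq> H \<and> 1 \<in> T \<and> (\<forall>t\<in>T. c t \<in> K) \<and>
      x = (\<Sum>t\<in>T. c t * t) \<and> a = c 1)"

lemma coord_exists:
  assumes K: "subfield K" and H1: "1 \<in> H" and x: "x \<in> span_over K H"
  shows "\<exists>a. coord K H x a"
proof -
  obtain T c where T: "finite T" "T \<subseteq> H" "\<forall>t\<in>T. c t \<in> K" "x = (\<Sum>t\<in>T. c t * t)"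
    using x unfolding span_over_def by blast
  define c' where "c' t = (if t \<in> T then c t else 0)" for t
  have fin: "finite (insert 1 T)" using T by simp
  have "x = (\<Sum>t\<in>insert 1 T. c' t * t)" unfolding c'_def T(4)
    by (rule sum_if_restrict[OF fin, symmetric]) auto
  moreover have "\<forall>t\<in>insert 1 T. c' t \<in> K" unfolding c'_def using T(3) sfD(1)[OF K] by simp
  ultimately have "coord K H x (c' 1)" unfolding coord_def
    by (intro exI[of _ "insert 1 T"] exI[of _ c'] conjI) (use fin T H1 in auto)
  then show ?thesis by blast
qed

lemma coord_combine:
  assumes K: "subfield K" and a: "coord K H x a" and b: "coord K H y b" and k: "k \<in> K"
  shows "coord K H (x + k * y) (a + k * b)"
proof -
  obtain T1 c1 where T1: "finite T1" "T1 \<subseteq> H" "1 \<in> T1" "\<forall>t\<in>T1. c1 t \<in> K"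
    "x = (\<Sum>t\<in>T1. c1 t * t)" "a = c1 1"
    using a unfolding coord_def by blast
  obtain T2 c2 where T2: "finite T2" "T2 \<subseteq> H" "1 \<in> T2" "\<forall>t\<in>T2. c2 t \<in> K"
    "y = (\<Sum>t\<in>T2. c2 t * t)" "b = c2 1"
    using b unfolding coord_def by blast
  define U where "U = T1 \<union> T2"
  define c where "c t = (if t \<in> T1 then c1 t else 0) + k * (if t \<in> T2 then c2 t else 0)" for t
  have fU: "finite U" using T1 T2 unfolding U_def by auto
  have "(\<Sum>t\<in>U. c t * t) = (\<Sum>t\<in>U. (if t \<in> T1 then c1 t else 0) * t + k * ((if t \<in> T2 then c2 t else 0) * t))"
    unfolding c_def by (rule sum.cong) (simp_all add: distrib_right)
  also have "\<dots> = (\<Sum>t\<in>U. (if t \<in> T1 then c1 t else 0) * t) + k * (\<Sum>t\<in>U. (if t \<in> T2 then c2 t else 0) * t)"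
    by (simp add: sum.distrib sum_distrib_left)
  also have "(\<Sum>t\<in>U. (if t \<in> T1 then c1 t else 0) * t) = x"
    unfolding T1(5) by (rule sum_if_restrict[OF fU]) (simp add: U_def)
  also have "(\<Sum>t\<in>U. (if t \<in> T2 then c2 t else 0) * t) = y"
    unfolding T2(5) by (rule sum_if_restrict[OF fU]) (simp add: U_def)
  finally have eq: "x + k * y = (\<Sum>t\<in>U. c t * t)" by simp
  have cK: "\<forall>t\<in>U. c t \<in> K"
  proof
    fix t assume "t \<in> U"
    have "(if t \<in> T1 then c1 t else 0) \<in> K" using T1(4) sfD(1)[OF K] by simp
    moreover have "(if t \<in> T2 then c2 t else 0) \<in> K" using T2(4) sfD(1)[OF K] by simp
    ultimately show "c t \<in> K" unfolding c_def using sfD(3,4)[OF K] k by blast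
  qed
  have "a + k * b = c 1" unfolding c_def using T1 T2 by simp
  then show ?thesis unfolding coord_def
    by (intro exI[of _ U] exI[of _ c] conjI) (use fU T1 T2 cK eq in \<open>auto simp: U_def\<close>)
qed

lemma coord_unique:
  assumes K: "subfield K" and ind: "lin_indep_over K H" and a: "coord K H x a" and b: "coord K H x b"
  shows "a = b"
proof -
  have m1: "(-1::complex) \<in> K" using sfD(2,5)[OF K] by blast
  have "coord K H (x + (-1) * x) (a + (-1) * b)" by (rule coord_combine[OF K a b m1])
  then obtain T c where T: "finite T" "T \<subseteq> H" "1 \<in> T" "\<forall>t\<in>T. c t \<in> K"
    "0 = (\<Sum>t\<in>T. c t * t)" "a - b = c 1"
    unfolding coord_def by auto
  have "c 1 = 0" using indepD[OF ind T(1,2) _ T(5)[symmetric] T(3)] T(4) by blast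
  then show ?thesis using T(6) by simp
qed

lemma proj_exists:
  assumes K: "subfield K"
  shows "\<exists>\<pi>. (\<forall>x y. \<pi> (x + y) = \<pi> x + \<pi> y) \<and> (\<forall>a x. a \<in> K \<longrightarrow> \<pi> (a * x) = a * \<pi> x)
     \<and> (\<forall>a\<in>K. \<pi> a = a) \<and> (\<forall>x. \<pi> x \<in> K)"
proof -
  obtain H where H: "1 \<in> H" "lin_indep_over K H" "\<And>x. x \<in> span_over K H"
    using maximal_indep[OF K] by blast
  define \<pi> where "\<pi> x = (THE a. coord K H x a)" for x
  have pi: "coord K H x (\<pi> x)" for x
    unfolding \<pi>_def using coord_exists[OF K H(1) H(3)] coord_unique[OF K H(2)] by (metis theI)
  have eqpi: "\<pi> x = a" if "coord K H x a" for x a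
    using coord_unique[OF K H(2) pi that] .
  have one: "1 \<in> K" "0 \<in> K" using sfD[OF K] by auto
  have "\<pi> (x + y) = \<pi> x + \<pi> y" for x y
    using eqpi[OF coord_combine[OF K pi pi one(1)]] by simp
  moreover have "\<pi> (a * x) = a * \<pi> x" if "a \<in> K" for a x
  proof -
    have c0: "coord K H 0 0"
      unfolding coord_def
      by (intro exI[of _ "{1}"] exI[of _ "\<lambda>_. 0"]) (use H(1) one in auto)
    show ?thesis using eqpi[OF coord_combine[OF K c0 pi that]] by simp
  qed
  moreover have "\<pi> a = a" if "a \<in> K" for a
  proof -
    have "coord K H a a"
      unfolding coord_def
      by (intro exI[of _ "{1}"] exI[of _ "\<lambda>_. a"]) (use H(1) that in auto)
    then show ?thesis by (rule eqpi)
  qed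
  moreover have "\<pi> x \<in> K" for x
    using pi[of x] unfolding coord_def by auto
  ultimately show ?thesis by blast
qed

definition tpoly :: "complex \<Rightarrow> nat \<Rightarrow> complex poly" where
  "tpoly b k = (\<Sum>i<k. monom (b ^ (k - Suc i)) i)"

lemma poly_tpoly: "poly (tpoly b k) c = (\<Sum>i<k. b ^ (k - Suc i) * c ^ i)"
  unfolding tpoly_def by (simp add: poly_sum poly_monom)

lemma tpoly_factor: "[:- (b ^ k), 1:] \<circ>\<^sub>p monom 1 k = [:- b, 1:] * tpoly b k"
proof (rule poly_eq_poly_eq_iff[THEN iffD1], rule ext)
  fix x
  have "poly ([:- (b ^ k), 1:] \<circ>\<^sub>p monom 1 k) x = x ^ k - b ^ k"
    by (simp add: poly_pcompose poly_monom)
  also have "\<dots> = (x - b) * (\<Sum>i<k. b ^ (k - Suc i) * x ^ i)" by (rule power_diff_sumr2)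
  also have "\<dots> = poly ([:- b, 1:] * tpoly b k) x" by (simp add: poly_tpoly left_diff_distrib)
  finally show "poly ([:- (b ^ k), 1:] \<circ>\<^sub>p monom 1 k) x = poly ([:- b, 1:] * tpoly b k) x" .
qed

lemma tpoly_nz:
  assumes k: "k > 0" and c0: "c \<noteq> 0" and inj: "c ^ k = b ^ k \<Longrightarrow> c = b"
  shows "poly (tpoly b k) c \<noteq> 0"
proof (cases "c = b")
  case True
  have "poly (tpoly b k) c = (\<Sum>i<k. c ^ (k - 1))"
    unfolding poly_tpoly True
  proof (rule sum.cong)
    fix i assume "i \<in> {..<k}"
    then have "k - Suc i + i = k - 1" by auto
    then show "b ^ (k - Suc i) * b ^ i = b ^ (k - 1)" by (metis power_add)
  qed simp
  also have "\<dots> = of_nat k * c ^ (k - 1)" by simp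
  finally show ?thesis using k c0 by simp
next
  case False
  have "(c - b) * poly (tpoly b k) c = c ^ k - b ^ k"
    unfolding poly_tpoly by (rule power_diff_sumr2[symmetric])
  moreover have "c ^ k - b ^ k \<noteq> 0" using inj False by auto
  ultimately show ?thesis by auto
qed

lemma interp_aux:
  fixes bs :: "complex list"
  assumes k: "k > 0"
  shows "(\<forall>b\<in>set bs. b \<noteq> 0) \<Longrightarrow> inj_on (\<lambda>b. b ^ k) (set bs) \<Longrightarrow>
    \<exists>P Q T. (\<Prod>b\<leftarrow>bs. [:- b, 1:]) dvd [:0, 1:] - P \<circ>\<^sub>p monom 1 k \<and>
      Q \<circ>\<^sub>p monom 1 k = (\<Prod>b\<leftarrow>bs. [:- b, 1:]) * T \<and>
      (\<forall>c. c \<noteq> 0 \<and> (\<forall>b\<in>set bs. c ^ k = b ^ k \<longrightarrow> c = b) \<longrightarrow> poly T c \<noteq> 0)"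
proof (induction bs)
  case Nil
  show ?case by (intro exI[of _ 0] exI[of _ 1] exI[of _ 1]) (simp add: pcompose_1)
next
  case (Cons \<beta> bs)
  have nz: "\<forall>b\<in>set bs. b \<noteq> 0" using Cons.prems(1) by simp
  have inj': "inj_on (\<lambda>b. b ^ k) (set bs)" using Cons.prems(2) by (simp add: inj_on_insert)
  obtain P Q T where PQT: "(\<Prod>b\<leftarrow>bs. [:- b, 1:]) dvd [:0, 1:] - P \<circ>\<^sub>p monom 1 k"
    "Q \<circ>\<^sub>p monom 1 k = (\<Prod>b\<leftarrow>bs. [:- b, 1:]) * T"
    "\<And>c. c \<noteq> 0 \<Longrightarrow> (\<forall>b\<in>set bs. c ^ k = b ^ k \<longrightarrow> c = b) \<Longrightarrow> poly T c \<noteq> 0"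
    using Cons.IH[OF nz inj'] by blast
  define g where "g = (\<Prod>b\<leftarrow>bs. [:- b, 1:])"
  obtain s where s: "[:0, 1:] - P \<circ>\<^sub>p monom 1 k = g * s" using PQT(1) unfolding g_def by (auto elim: dvdE)
  have \<beta>0: "\<beta> \<noteq> 0" using Cons.prems(1) by simp
  have \<beta>inj: "\<forall>b\<in>set bs. \<beta> ^ k = b ^ k \<longrightarrow> \<beta> = b"
    using Cons.prems(2) by (auto simp: inj_on_def)
  have T\<beta>: "poly T \<beta> \<noteq> 0" by (rule PQT(3)[OF \<beta>0 \<beta>inj])
  define a where "a = poly s \<beta> / poly T \<beta>"
  define P' where "P' = P + smult a Q"
  have "[:0, 1:] - P' \<circ>\<^sub>p monom 1 k = g * (s - smult a T)"
    unfolding P'_def pcompose_add pcompose_smult PQT(2) using s unfolding g_def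
    by (simp add: algebra_simps)
  moreover have "[:- \<beta>, 1:] dvd s - smult a T"
    unfolding poly_eq_0_iff_dvd[symmetric] a_def using T\<beta> by simp
  ultimately have d1: "(\<Prod>b\<leftarrow>\<beta> # bs. [:- b, 1:]) dvd [:0, 1:] - P' \<circ>\<^sub>p monom 1 k"
  proof -
    assume e: "[:0, 1:] - P' \<circ>\<^sub>p monom 1 k = g * (s - smult a T)" and dv: "[:- \<beta>, 1:] dvd s - smult a T"
    have "[:- \<beta>, 1:] * g dvd (s - smult a T) * g" by (rule mult_dvd_mono[OF dv dvd_refl])
    then show ?thesis unfolding e g_def by (simp add: mult.commute)
  qed
  define Q' where "Q' = [:- (\<beta> ^ k), 1:] * Q"
  define T' where "T' = tpoly \<beta> k * T"
  have d2: "Q' \<circ>\<^sub>p monom 1 k = (\<Prod>b\<leftarrow>\<beta> # bs. [:- b, 1:]) * T'"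
    unfolding Q'_def T'_def pcompose_mult tpoly_factor PQT(2) list.map prod_list.Cons by (simp only: ac_simps)
  have d3: "\<forall>c. c \<noteq> 0 \<and> (\<forall>b\<in>set (\<beta> # bs). c ^ k = b ^ k \<longrightarrow> c = b) \<longrightarrow> poly T' c \<noteq> 0"
  proof (intro allI impI)
    fix c assume c: "c \<noteq> 0 \<and> (\<forall>b\<in>set (\<beta> # bs). c ^ k = b ^ k \<longrightarrow> c = b)"
    have "poly T c \<noteq> 0" using PQT(3)[of c] c by simp
    moreover have "poly (tpoly \<beta> k) c \<noteq> 0" by (rule tpoly_nz[OF k]) (use c in auto)
    ultimately show "poly T' c \<noteq> 0" unfolding T'_def by simp
  qed
  show ?case using d1 d2 d3 by blast
qed

lemma interp:
  fixes bs :: "complex list"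
  assumes "k > 0" "\<forall>b\<in>set bs. b \<noteq> 0" "inj_on (\<lambda>b. b ^ k) (set bs)"
  shows "\<exists>P. (\<Prod>b\<leftarrow>bs. [:- b, 1:]) dvd [:0, 1:] - P \<circ>\<^sub>p monom 1 k"
  using interp_aux[OF assms] by blast

definition pv :: "complex mat \<Rightarrow> complex poly \<Rightarrow> complex vec \<Rightarrow> complex vec" where
  "pv A p v = fold_coeffs (\<lambda>a w. a \<cdot>\<^sub>v v + A *\<^sub>v w) p (0\<^sub>v (dim_vec v))"

lemma pv_0: "pv A 0 v = 0\<^sub>v (dim_vec v)"
  unfolding pv_def by simp

context
  fixes A :: "complex mat" and n :: nat
  assumes A: "A \<in> carrier_mat n n"
begin

lemma pv_pCons: assumes v: "v \<in> carrier_vec n"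
  shows "pv A (pCons a p) v = a \<cdot>\<^sub>v v + A *\<^sub>v pv A p v"
proof (cases "p = 0 \<and> a = 0")
  case True
  then show ?thesis unfolding pv_def using A v by (intro eq_vecI) (auto simp: scalar_prod_def)
next
  case False
  then show ?thesis unfolding pv_def by (cases "p = 0") auto
qed

lemma pv_carrier: assumes v: "v \<in> carrier_vec n" shows "pv A p v \<in> carrier_vec n"
proof (induction p rule: pCons_induct)
  case 0 then show ?case using v by (simp add: pv_0)
next
  case (pCons a p) then show ?case using v A by (simp add: pv_pCons)
qed

lemma pv_add: assumes v: "v \<in> carrier_vec n"
  shows "pv A (p + q) v = pv A p v + pv A q v"
proof (induction p arbitrary: q rule: pCons_induct)
  case 0 then show ?case using pv_carrier[OF v] v by (simp add: pv_0)
next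
  case (pCons a p)
  obtain b q' where q: "q = pCons b q'" by (cases q) auto
  have c1: "pv A (p + q') v \<in> carrier_vec n" "pv A p v \<in> carrier_vec n" "pv A q' v \<in> carrier_vec n"
    using pv_carrier[OF v] by auto
  show ?case unfolding q pv_pCons[OF v] add_pCons pCons.IH
    using A v c1 by (intro eq_vecI) (auto simp: mult_add_distrib_mat_vec algebra_simps)
qed

lemma pv_smult: assumes v: "v \<in> carrier_vec n"
  shows "pv A (smult c p) v = c \<cdot>\<^sub>v pv A p v"
proof (induction p rule: pCons_induct)
  case 0 then show ?case using v by (auto simp: pv_0)
next
  case (pCons a p)
  have c1: "pv A p v \<in> carrier_vec n" using pv_carrier[OF v] by auto
  show ?case unfolding smult_pCons pv_pCons[OF v] pCons.IH
    using A v c1 by (intro eq_vecI) (auto simp: mult_mat_vec algebra_simps)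
qed

lemma pv_mult: assumes v: "v \<in> carrier_vec n"
  shows "pv A (p * q) v = pv A p (pv A q v)"
proof (induction p rule: pCons_induct)
  case 0
  have "dim_vec (pv A q v) = dim_vec v" using pv_carrier[OF v, of q] v by (metis carrier_vecD)
  then show ?case by (simp add: pv_0)
next
  case (pCons a p)
  have c1: "pv A q v \<in> carrier_vec n" "pv A (p * q) v \<in> carrier_vec n" using pv_carrier[OF v] by auto
  have "pv A (pCons a p * q) v = pv A (smult a q + pCons 0 (p * q)) v" by simp
  also have "\<dots> = a \<cdot>\<^sub>v pv A q v + (0 \<cdot>\<^sub>v v + A *\<^sub>v pv A (p * q) v)"
    unfolding pv_add[OF v] pv_smult[OF v] pv_pCons[OF v] ..
  also have "\<dots> = a \<cdot>\<^sub>v pv A q v + A *\<^sub>v pv A p (pv A q v)"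
    unfolding pCons.IH using c1 A v by (intro eq_vecI) auto
  also have "\<dots> = pv A (pCons a p) (pv A q v)" unfolding pv_pCons[OF c1(1)] ..
  finally show ?case .
qed

lemma pv_const: assumes v: "v \<in> carrier_vec n" shows "pv A [:c:] v = c \<cdot>\<^sub>v v"
  unfolding pv_pCons[OF v] pv_0 using A v by (intro eq_vecI) (auto simp: scalar_prod_def)

lemma pv_x: assumes v: "v \<in> carrier_vec n" shows "pv A [:0, 1:] v = A *\<^sub>v v"
proof -
  have "pv A [:0, 1:] v = 0 \<cdot>\<^sub>v v + A *\<^sub>v pv A [:1:] v" by (rule pv_pCons[OF v])
  also have "pv A [:1:] v = 1 \<cdot>\<^sub>v v" by (rule pv_const[OF v])
  finally show ?thesis using A v by (intro eq_vecI) auto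
qed

lemma pv_monom: "v \<in> carrier_vec n \<Longrightarrow> pv A (monom 1 k) v = (A ^\<^sub>m k) *\<^sub>v v"
proof (induction k arbitrary: v)
  case 0 then show ?case using A by (simp add: monom_0 pv_const)
next
  case (Suc k v)
  have Av: "A *\<^sub>v v \<in> carrier_vec n" using A Suc.prems by simp
  have "monom (1::complex) (Suc k) = monom 1 k * [:0, 1:]" by (simp add: monom_Suc mult_pCons_right)
  then have "pv A (monom 1 (Suc k)) v = pv A (monom 1 k * [:0, 1:]) v" by (simp only:)
  also have "\<dots> = pv A (monom 1 k) (pv A [:0, 1:] v)" by (rule pv_mult[OF Suc.prems])
  also have "\<dots> = pv A (monom 1 k) (A *\<^sub>v v)" by (simp only: pv_x[OF Suc.prems])
  also have "\<dots> = (A ^\<^sub>m k) *\<^sub>v (A *\<^sub>v v)" by (rule Suc.IH[OF Av])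
  also have "\<dots> = (A ^\<^sub>m k * A) *\<^sub>v v" by (rule assoc_mult_mat_vec[symmetric, of _ n n _ n]) (use A Suc.prems in auto)
  finally show ?case by simp
qed

lemma pv_sub: assumes v: "v \<in> carrier_vec n" and AB: "A *\<^sub>v v = b \<cdot>\<^sub>v v + w" and w: "w \<in> carrier_vec n"
  shows "pv A [:- b, 1:] v = w"
proof -
  have "pv A [:- b, 1:] v = (- b) \<cdot>\<^sub>v v + A *\<^sub>v pv A [:1:] v" by (rule pv_pCons[OF v])
  also have "pv A [:1:] v = 1 \<cdot>\<^sub>v v" by (rule pv_const[OF v])
  finally show ?thesis using A v w AB by (intro eq_vecI) auto
qed

end

lemma pv_comp:
  assumes A: "A \<in> carrier_mat n n" and v: "v \<in> carrier_vec n"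
  shows "pv A (P \<circ>\<^sub>p monom 1 M) v = pv (A ^\<^sub>m M) P v"
proof (induction P rule: pCons_induct)
  case 0 then show ?case by (simp add: pv_0)
next
  case (pCons a P)
  have AM: "A ^\<^sub>m M \<in> carrier_mat n n" using A by simp
  have c1: "pv A (P \<circ>\<^sub>p monom 1 M) v \<in> carrier_vec n" using pv_carrier[OF A v] by blast
  have "pv A (pCons a P \<circ>\<^sub>p monom 1 M) v = pv A ([:a:] + monom 1 M * (P \<circ>\<^sub>p monom 1 M)) v"
    by (simp add: pcompose_pCons)
  also have "\<dots> = a \<cdot>\<^sub>v v + (A ^\<^sub>m M) *\<^sub>v pv A (P \<circ>\<^sub>p monom 1 M) v"
    unfolding pv_add[OF A v] pv_const[OF A v] pv_mult[OF A v] pv_monom[OF A c1] ..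
  also have "\<dots> = pv (A ^\<^sub>m M) (pCons a P) v" unfolding pv_pCons[OF AM v] pCons.IH ..
  finally show ?case .
qed

lemma vec_dep:
  fixes X :: "complex vec set"
  assumes fX: "finite X" and cX: "X \<subseteq> carrier_vec n" and card: "card X > n"
  shows "\<exists>a v. v \<in> X \<and> a v \<noteq> 0 \<and> (\<forall>i<n. (\<Sum>x\<in>X. a x * x $ i) = 0)"
proof -
  interpret vec_space "TYPE(complex)" n .
  have "lin_dep X"
  proof (rule ccontr)
    assume "\<not> lin_dep X"
    then have "card X \<le> dim" using li_le_dim(2)[OF fin_dim cX] by blast
    then show False using card dim_is_n by simp
  qed
  then obtain B a v where B: "finite B" "B \<subseteq> X" "lincomb a B = 0\<^sub>v n" "v \<in> B" "a v \<noteq> 0"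
    unfolding lin_dep_def by blast
  define b where "b x = (if x \<in> B then a x else 0)" for x
  have "(\<Sum>x\<in>X. b x * x $ i) = 0" if i: "i < n" for i
  proof -
    have "(\<Sum>x\<in>X. b x * x $ i) = (\<Sum>x\<in>X. if x \<in> B then a x * x $ i else 0)"
      unfolding b_def by (rule sum.cong) auto
    also have "\<dots> = (\<Sum>x\<in>X \<inter> B. a x * x $ i)" using fX by (simp add: sum.inter_restrict)
    also have "X \<inter> B = B" using B(2) by auto
    also have "(\<Sum>x\<in>B. a x * x $ i) = lincomb a B $ i"
      using lincomb_index[OF i, of B a] B(2) cX by auto
    also have "\<dots> = 0" using B(3) i by simp
    finally show ?thesis .
  qed
  moreover have "v \<in> X" "b v \<noteq> 0" using B unfolding b_def by auto
  ultimately show ?thesis by blast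
qed

lemma pv_sum_index:
  assumes A: "A \<in> carrier_mat n n" and w: "w \<in> carrier_vec n" and r: "r < n"
  shows "pv A (sum f I) w $ r = (\<Sum>i\<in>I. pv A (f i) w $ r)"
proof (induction I rule: infinite_finite_induct)
  case (infinite I) then show ?case using w r by (simp add: pv_0)
next
  case empty then show ?case using w r by (simp add: pv_0)
next
  case (insert x F)
  have "pv A (sum f (insert x F)) w = pv A (f x) w + pv A (sum f F) w"
    using insert(1,2) pv_add[OF A w] by simp
  moreover have "dim_vec (pv A (sum f F) w) = n" using pv_carrier[OF A w] by (metis carrier_vecD)
  ultimately show ?case using insert r by simp
qed

lemma pv_monom_index:
  assumes A: "A \<in> carrier_mat n n" and w: "w \<in> carrier_vec n" and r: "r < n"
  shows "pv A (monom c i) w $ r = c * ((A ^\<^sub>m i) *\<^sub>v w) $ r"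
proof -
  have "monom c i = smult c (monom 1 i)" by (simp add: smult_monom)
  then have "pv A (monom c i) w = c \<cdot>\<^sub>v ((A ^\<^sub>m i) *\<^sub>v w)"
    using pv_smult[OF A w] pv_monom[OF A w] by simp
  then show ?thesis using A w r by simp
qed

lemma annihilator:
  assumes A: "A \<in> carrier_mat n n" and w: "w \<in> carrier_vec n"
  shows "\<exists>p. p \<noteq> 0 \<and> pv A p w = 0\<^sub>v n"
proof (cases "inj_on (\<lambda>i. (A ^\<^sub>m i) *\<^sub>v w) {..n}")
  case False
  then obtain i j where ij: "i \<noteq> j" "(A ^\<^sub>m i) *\<^sub>v w = (A ^\<^sub>m j) *\<^sub>v w"
    unfolding inj_on_def by blast
  define p where "p = monom (1::complex) i + smult (-1) (monom 1 j)"
  have "coeff p i = 1" unfolding p_def using ij(1) by simp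
  then have "p \<noteq> 0" by auto
  moreover have "pv A p w = 0\<^sub>v n"
    unfolding p_def pv_add[OF A w] pv_smult[OF A w] pv_monom[OF A w] ij(2)
    using A w by (intro eq_vecI) auto
  ultimately show ?thesis by blast
next
  case True
  define X where "X = (\<lambda>i. (A ^\<^sub>m i) *\<^sub>v w) ` {..n}"
  have fX: "finite X" unfolding X_def by simp
  have cX: "X \<subseteq> carrier_vec n" unfolding X_def using mult_mat_vec_carrier[OF pow_carrier_mat[OF A] w] by auto
  have card: "card X > n" unfolding X_def using card_image[OF True] by simp
  obtain a v where av: "v \<in> X" "a v \<noteq> 0" "\<And>r. r < n \<Longrightarrow> (\<Sum>x\<in>X. a x * x $ r) = 0"
    using vec_dep[OF fX cX card] by blast
  define c where "c i = a ((A ^\<^sub>m i) *\<^sub>v w)" for i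
  define p where "p = (\<Sum>i\<le>n. monom (c i) i)"
  obtain i1 where i1: "i1 \<le> n" "v = (A ^\<^sub>m i1) *\<^sub>v w" using av(1) unfolding X_def by auto
  have "coeff p i1 = c i1" unfolding p_def coeff_sum using i1(1)
    by (simp add: coeff_monom sum.delta)
  then have "p \<noteq> 0" using av(2) i1(2) unfolding c_def by auto
  moreover have "pv A p w = 0\<^sub>v n"
  proof (rule eq_vecI)
    show "dim_vec (pv A p w) = dim_vec (0\<^sub>v n)" using pv_carrier[OF A w] by simp
    fix r assume "r < dim_vec (0\<^sub>v n)"
    then have r: "r < n" by simp
    have "pv A p w $ r = (\<Sum>i\<le>n. c i * ((A ^\<^sub>m i) *\<^sub>v w) $ r)"
      unfolding p_def pv_sum_index[OF A w r] pv_monom_index[OF A w r] ..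
    also have "\<dots> = (\<Sum>x\<in>X. a x * x $ r)"
      unfolding X_def c_def by (simp add: sum.reindex[OF True])
    also have "\<dots> = 0" by (rule av(3)[OF r])
    finally show "pv A p w $ r = 0\<^sub>v n $ r" using r by simp
  qed
  ultimately show ?thesis by blast
qed

lemma pv_lin_zero:
  assumes A: "A \<in> carrier_mat n n" and u: "u \<in> carrier_vec n" and z: "pv A [:- b, 1:] u = 0\<^sub>v n"
  shows "A *\<^sub>v u = b \<cdot>\<^sub>v u"
proof -
  have "pv A [:- b, 1:] u = (- b) \<cdot>\<^sub>v u + A *\<^sub>v pv A [:1:] u" by (rule pv_pCons[OF A u])
  also have "pv A [:1:] u = 1 \<cdot>\<^sub>v u" by (rule pv_const[OF A u])
  finally have e: "(- b) \<cdot>\<^sub>v u + A *\<^sub>v u = 0\<^sub>v n" using z u by simp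
  show ?thesis
  proof (rule eq_vecI)
    show "dim_vec (A *\<^sub>v u) = dim_vec (b \<cdot>\<^sub>v u)" using A u by simp
    fix i assume "i < dim_vec (b \<cdot>\<^sub>v u)"
    then have i: "i < n" using u by simp
    have "((- b) \<cdot>\<^sub>v u + A *\<^sub>v u) $ i = 0" using e i by simp
    then have "- b * u $ i + (A *\<^sub>v u) $ i = 0" using i A u by simp
    then show "(A *\<^sub>v u) $ i = (b \<cdot>\<^sub>v u) $ i" using i u by (simp add: add_eq_0_iff2)
  qed
qed

lemma removal:
  assumes A: "A \<in> carrier_mat n n"
  shows "w \<in> carrier_vec n \<Longrightarrow> pv A (\<Prod>b\<leftarrow>bs. [:- b, 1:]) w = 0\<^sub>v n \<Longrightarrow>
    \<exists>cs. (\<forall>c\<in>set cs. eigenvalue A c) \<and> pv A (\<Prod>c\<leftarrow>cs. [:- c, 1:]) w = 0\<^sub>v n"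
proof (induction bs arbitrary: w)
  case Nil
  then show ?case by (intro exI[of _ "[]"]) simp
next
  case (Cons b bs w)
  define w' where "w' = pv A [:- b, 1:] w"
  have w': "w' \<in> carrier_vec n" unfolding w'_def by (rule pv_carrier[OF A Cons.prems(1)])
  have "pv A (\<Prod>b\<leftarrow>b # bs. [:- b, 1:]) w = pv A ((\<Prod>b\<leftarrow>bs. [:- b, 1:]) * [:- b, 1:]) w"
    by (simp add: mult.commute)
  also have "\<dots> = pv A (\<Prod>b\<leftarrow>bs. [:- b, 1:]) w'" unfolding w'_def by (rule pv_mult[OF A Cons.prems(1)])
  finally have "pv A (\<Prod>b\<leftarrow>bs. [:- b, 1:]) w' = 0\<^sub>v n" using Cons.prems(2) by simp
  then obtain cs where cs: "\<forall>c\<in>set cs. eigenvalue A c" "pv A (\<Prod>c\<leftarrow>cs. [:- c, 1:]) w' = 0\<^sub>v n"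
    using Cons.IH[OF w'] by blast
  define u where "u = pv A (\<Prod>c\<leftarrow>cs. [:- c, 1:]) w"
  have u: "u \<in> carrier_vec n" unfolding u_def by (rule pv_carrier[OF A Cons.prems(1)])
  have key: "pv A [:- b, 1:] u = 0\<^sub>v n"
  proof -
    have "pv A [:- b, 1:] u = pv A ([:- b, 1:] * (\<Prod>c\<leftarrow>cs. [:- c, 1:])) w"
      unfolding u_def by (rule pv_mult[OF A Cons.prems(1), symmetric])
    also have "\<dots> = pv A ((\<Prod>c\<leftarrow>cs. [:- c, 1:]) * [:- b, 1:]) w" by (simp only: mult.commute)
    also have "\<dots> = pv A (\<Prod>c\<leftarrow>cs. [:- c, 1:]) w'" unfolding w'_def by (rule pv_mult[OF A Cons.prems(1)])
    finally show ?thesis using cs(2) by simp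
  qed
  show ?case
  proof (cases "eigenvalue A b")
    case True
    have pe: "(\<Prod>c\<leftarrow>b # cs. [:- c, 1:]) = [:- b, 1:] * (\<Prod>c\<leftarrow>cs. [:- c, 1:])" by simp
    have "pv A (\<Prod>c\<leftarrow>b # cs. [:- c, 1:]) w = pv A [:- b, 1:] u"
      unfolding u_def pe by (rule pv_mult[OF A Cons.prems(1)])
    then show ?thesis using True cs(1) key by (intro exI[of _ "b # cs"]) simp
  next
    case False
    have "u = 0\<^sub>v n"
    proof (rule ccontr)
      assume "u \<noteq> 0\<^sub>v n"
      then have "eigenvector A u b"
        unfolding eigenvector_def using u A pv_lin_zero[OF A u key] by auto
      then show False using False unfolding eigenvalue_def by blast
    qed
    then show ?thesis using cs(1) unfolding u_def by blast
  qed
qed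

lemma eig_annihilator:
  assumes A: "A \<in> carrier_mat n n" and w: "w \<in> carrier_vec n"
  shows "\<exists>cs. (\<forall>c\<in>set cs. eigenvalue A c) \<and> pv A (\<Prod>c\<leftarrow>cs. [:- c, 1:]) w = 0\<^sub>v n"
proof -
  obtain p where p: "p \<noteq> 0" "pv A p w = 0\<^sub>v n" using annihilator[OF A w] by blast
  obtain as where as: "smult (coeff p (degree p)) (\<Prod>a\<leftarrow>as. [:- a, 1:]) = p"
    using fundamental_theorem_algebra_factorized[of p] by blast
  have lc: "coeff p (degree p) \<noteq> 0" using p(1) by simp
  have "coeff p (degree p) \<cdot>\<^sub>v pv A (\<Prod>a\<leftarrow>as. [:- a, 1:]) w = 0\<^sub>v n"
    using p(2) pv_smult[OF A w] as by metis
  then have "pv A (\<Prod>a\<leftarrow>as. [:- a, 1:]) w = 0\<^sub>v n"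
  proof -
    assume e: "coeff p (degree p) \<cdot>\<^sub>v pv A (\<Prod>a\<leftarrow>as. [:- a, 1:]) w = 0\<^sub>v n"
    have c: "pv A (\<Prod>a\<leftarrow>as. [:- a, 1:]) w \<in> carrier_vec n" by (rule pv_carrier[OF A w])
    show ?thesis
    proof (rule eq_vecI)
      show "dim_vec (pv A (\<Prod>a\<leftarrow>as. [:- a, 1:]) w) = dim_vec (0\<^sub>v n)" using c by simp
      fix i assume "i < dim_vec (0\<^sub>v n)"
      then have i: "i < n" by simp
      have "(coeff p (degree p) \<cdot>\<^sub>v pv A (\<Prod>a\<leftarrow>as. [:- a, 1:]) w) $ i = 0" using e i by simp
      then have "coeff p (degree p) * pv A (\<Prod>a\<leftarrow>as. [:- a, 1:]) w $ i = 0" using c i by simp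
      then show "pv A (\<Prod>a\<leftarrow>as. [:- a, 1:]) w $ i = 0\<^sub>v n $ i" using lc i by simp
    qed
  qed
  then show ?thesis using removal[OF A w] by blast
qed

definition polyK :: "complex set \<Rightarrow> complex poly \<Rightarrow> bool" where
  "polyK K p \<longleftrightarrow> (\<forall>i. coeff p i \<in> K)"

lemma polyK_add: "subfield K \<Longrightarrow> polyK K p \<Longrightarrow> polyK K q \<Longrightarrow> polyK K (p + q)"
  unfolding polyK_def using sfD(3) by simp

lemma polyK_mult: "subfield K \<Longrightarrow> polyK K p \<Longrightarrow> polyK K q \<Longrightarrow> polyK K (p * q)"
  unfolding polyK_def coeff_mult by (intro allI sf_sum sfD(4)) auto

lemma polyK_const: "subfield K \<Longrightarrow> c \<in> K \<Longrightarrow> polyK K [:c:]"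
  unfolding polyK_def by (auto simp: coeff_pCons sfD(1) split: nat.split)

lemma polyK_x: "subfield K \<Longrightarrow> polyK K [:0, 1:]"
  unfolding polyK_def by (auto simp: coeff_pCons sfD(1,2) split: nat.split)

lemma polyK_sum: "subfield K \<Longrightarrow> (\<And>i. i \<in> I \<Longrightarrow> polyK K (f i)) \<Longrightarrow> polyK K (sum f I)"
proof (induction I rule: infinite_finite_induct)
  case (insert x F) then show ?case using polyK_add by simp
qed (auto simp: polyK_def sfD(1))

lemma polyK_prod: "subfield K \<Longrightarrow> (\<And>i. i \<in> I \<Longrightarrow> polyK K (f i)) \<Longrightarrow> polyK K (prod f I)"
proof (induction I rule: infinite_finite_induct)
  case (insert x F) then show ?case using polyK_mult by simp
next
  case (infinite I) then show ?case using polyK_const[of K 1] sfD(2) by (simp add: one_pCons)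
next
  case empty then show ?case using polyK_const[of K 1] sfD(2) by (simp add: one_pCons)
qed

lemma charpoly_K:
  assumes K: "subfield K" and A: "A \<in> carrier_mat d d" and AK: "entries_in K A"
  shows "coeff (char_poly A) i \<in> K"
proof -
  let ?M = "char_poly_matrix A"
  have M: "?M \<in> carrier_mat d d" using A by simp
  have entK: "polyK K (?M $$ (i, j))" if "i < d" "j < d" for i j
  proof -
    have "?M $$ (i, j) = (if i = j then [:0, 1:] else 0) + [:- A $$ (i, j):]"
      using that A unfolding char_poly_matrix_def by simp
    moreover have "polyK K (if i = j then [:0, 1:] else 0)"
      using polyK_x[OF K] polyK_const[OF K sfD(1)[OF K]] by auto
    moreover have "polyK K [:- A $$ (i, j):]"
      using polyK_const[OF K sfD(5)[OF K]] AK that A unfolding entries_in_def by auto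
    ultimately show ?thesis using polyK_add[OF K] by simp
  qed
  have sgn: "polyK K (of_int (sign p))" for p :: "nat \<Rightarrow> nat"
  proof -
    have "(of_int (sign p) :: complex poly) = [:1:] \<or> (of_int (sign p) :: complex poly) = [:-1:]"
      by (simp add: sign_def one_pCons)
    then show ?thesis using polyK_const[OF K sfD(2)[OF K]] polyK_const[OF K sfD(5)[OF K sfD(2)[OF K]]]
      by auto
  qed
  have "polyK K (det ?M)"
    unfolding det_def using M
    by (auto intro!: polyK_sum[OF K] polyK_mult[OF K] sgn polyK_prod[OF K] entK)
  then show ?thesis unfolding char_poly_def polyK_def by blast
qed

lemma entries_mult:
  assumes K: "subfield K" and X: "X \<in> carrier_mat d d" and Y: "Y \<in> carrier_mat d d"
    and XK: "entries_in K X" and YK: "entries_in K Y"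
  shows "entries_in K (X * Y)"
  unfolding entries_in_def
proof (intro allI impI)
  fix i j assume i: "i < dim_row (X * Y)" and j: "j < dim_col (X * Y)"
  have "(X * Y) $$ (i, j) = (\<Sum>l\<in>{0..<d}. X $$ (i, l) * Y $$ (l, j))"
    using i j X Y by (simp add: scalar_prod_def)
  also have "\<dots> \<in> K"
    by (rule sf_sum[OF K], rule sfD(4)[OF K]) (use XK YK X Y i j in \<open>auto simp: entries_in_def\<close>)
  finally show "(X * Y) $$ (i, j) \<in> K" .
qed

lemma entries_pow:
  assumes K: "subfield K" and A: "A \<in> carrier_mat d d" and AK: "entries_in K A"
  shows "entries_in K (A ^\<^sub>m k)"
proof (induction k)
  case 0 then show ?case using A sfD(1,2)[OF K] unfolding entries_in_def by auto
next
  case (Suc k) then show ?case using entries_mult[OF K _ A _ AK] A by simp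
qed

lemma vec_K:
  assumes K: "subfield K" and A: "A \<in> carrier_mat d d" and AK: "entries_in K A"
    and v: "v \<in> Kvecs K d"
  shows "A *\<^sub>v v \<in> Kvecs K d"
  unfolding Kvecs_def
proof (intro CollectI conjI allI impI)
  show "A *\<^sub>v v \<in> carrier_vec d" using A v unfolding Kvecs_def by auto
  fix i assume i: "i < d"
  have "(A *\<^sub>v v) $ i = (\<Sum>l\<in>{0..<d}. A $$ (i, l) * v $ l)"
    using i A v unfolding Kvecs_def by (auto simp: scalar_prod_def)
  also have "\<dots> \<in> K"
    by (rule sf_sum[OF K], rule sfD(4)[OF K]) (use AK A i v in \<open>auto simp: entries_in_def Kvecs_def\<close>)
  finally show "(A *\<^sub>v v) $ i \<in> K" .
qed

lemma pow_mat_add: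
  assumes A: "A \<in> carrier_mat n n"
  shows "A ^\<^sub>m (a + b) = A ^\<^sub>m a * A ^\<^sub>m b"
proof (induction b)
  case 0 then show ?case using A by simp
next
  case (Suc b)
  have "A ^\<^sub>m (a + Suc b) = (A ^\<^sub>m a * A ^\<^sub>m b) * A" using Suc by simp
  also have "\<dots> = A ^\<^sub>m a * (A ^\<^sub>m b * A)"
    by (rule assoc_mult_mat[of _ n n _ n _ n]) (use A in auto)
  finally show ?case by simp
qed

lemma pow_mat_mult:
  assumes A: "A \<in> carrier_mat n n"
  shows "A ^\<^sub>m (a * b) = (A ^\<^sub>m a) ^\<^sub>m b"
proof (induction b)
  case 0 then show ?case using A by simp
next
  case (Suc b)
  have "A ^\<^sub>m (a * Suc b) = A ^\<^sub>m (a * b + a)" by (simp add: add.commute)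
  also have "\<dots> = A ^\<^sub>m (a * b) * A ^\<^sub>m a" by (rule pow_mat_add[OF A])
  finally show ?case using Suc by simp
qed

lemma invariant_pow:
  assumes B: "B \<in> carrier_mat n n" and V: "V \<subseteq> carrier_vec n" and inv: "invariant_under B V"
  shows "invariant_under (B ^\<^sub>m k) V"
  unfolding invariant_under_def
proof (induction k)
  case 0 show ?case
  proof
    fix v assume v: "v \<in> V"
    then have "v \<in> carrier_vec n" using V by auto
    then have "(B ^\<^sub>m 0) *\<^sub>v v = v" using B by simp
    then show "(B ^\<^sub>m 0) *\<^sub>v v \<in> V" using v by simp
  qed
next
  case (Suc k)
  show ?case
  proof
    fix v assume v: "v \<in> V"
    have "(B ^\<^sub>m Suc k) *\<^sub>v v = (B ^\<^sub>m k) *\<^sub>v (B *\<^sub>v v)"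
      using B V v by (auto intro!: assoc_mult_mat_vec[of _ n n _ n])
    also have "\<dots> \<in> V" using Suc inv v unfolding invariant_under_def by blast
    finally show "(B ^\<^sub>m Suc k) *\<^sub>v v \<in> V" .
  qed
qed

lemma pv_in_V:
  assumes K: "subfield K" and VS: "K_subspace K d V" and C: "C \<in> carrier_mat d d"
    and inv: "invariant_under C V" and v: "v \<in> V"
  shows "polyK K Q \<Longrightarrow> pv C Q v \<in> V"
proof (induction Q rule: pCons_induct)
  have vc: "v \<in> carrier_vec d" using VS v unfolding K_subspace_def Kvecs_def by auto
  case 0 then show ?case using VS vc unfolding K_subspace_def by (simp add: pv_0)
next
  have vc: "v \<in> carrier_vec d" using VS v unfolding K_subspace_def Kvecs_def by auto
  case (pCons a Q)
  have aK: "a \<in> K" using pCons.prems unfolding polyK_def by (metis coeff_pCons_0)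
  have QK: "polyK K Q" using pCons.prems unfolding polyK_def by (metis coeff_pCons_Suc)
  have "pv C (pCons a Q) v = a \<cdot>\<^sub>v v + C *\<^sub>v pv C Q v" by (rule pv_pCons[OF C vc])
  also have "\<dots> \<in> V"
    using VS aK v pCons.IH[OF QK] inv unfolding K_subspace_def invariant_under_def by blast
  finally show ?case .
qed

lemma proj_sum:
  fixes \<pi> :: "complex \<Rightarrow> complex" and f :: "'a \<Rightarrow> complex"
  assumes add: "\<forall>x y. \<pi> (x + y) = \<pi> x + \<pi> y"
  shows "\<pi> (sum f J) = (\<Sum>j\<in>J. \<pi> (f j))"
proof -
  have z: "\<pi> 0 = 0" using add[rule_format, of 0 0] by simp
  show ?thesis
  proof (induction J rule: infinite_finite_induct)
    case (insert x F) then show ?case using add by simp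
  qed (simp_all add: z)
qed

lemma pv_proj:
  fixes \<pi> :: "complex \<Rightarrow> complex"
  assumes K: "subfield K" and C: "C \<in> carrier_mat d d" and CK: "entries_in K C"
    and v: "v \<in> Kvecs K d"
    and add: "\<forall>x y. \<pi> (x + y) = \<pi> x + \<pi> y" and hom: "\<forall>a x. a \<in> K \<longrightarrow> \<pi> (a * x) = a * \<pi> x"
  shows "i < d \<Longrightarrow> pv C (map_poly \<pi> P) v $ i = \<pi> (pv C P v $ i)"
proof (induction P arbitrary: i rule: pCons_induct)
  have z: "\<pi> 0 = 0" using add[rule_format, of 0 0] by simp
  have vc: "v \<in> carrier_vec d" using v unfolding Kvecs_def by auto
  case 0 then show ?case using vc z by (simp add: pv_0)
next
  have z: "\<pi> 0 = 0" using add[rule_format, of 0 0] by simp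
  have vc: "v \<in> carrier_vec d" using v unfolding Kvecs_def by auto
  have vK: "\<And>i. i < d \<Longrightarrow> v $ i \<in> K" using v unfolding Kvecs_def by auto
  case (pCons a P i)
  have c1: "pv C (map_poly \<pi> P) v \<in> carrier_vec d" "pv C P v \<in> carrier_vec d"
    using pv_carrier[OF C vc] by auto
  have "pv C (map_poly \<pi> (pCons a P)) v $ i = pv C (pCons (\<pi> a) (map_poly \<pi> P)) v $ i"
  proof -
    have "map_poly \<pi> (pCons a P) = pCons (\<pi> a) (map_poly \<pi> P)"
      by (rule poly_eqI) (simp add: coeff_map_poly[of \<pi>, OF z] coeff_pCons split: nat.split)
    then show ?thesis by simp
  qed
  also have "\<dots> = (\<pi> a \<cdot>\<^sub>v v + C *\<^sub>v pv C (map_poly \<pi> P) v) $ i" by (simp add: pv_pCons[OF C vc])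
  also have "\<dots> = \<pi> a * v $ i + (\<Sum>l\<in>{0..<d}. C $$ (i, l) * pv C (map_poly \<pi> P) v $ l)"
    using pCons.prems C vc c1 by (simp add: scalar_prod_def)
  also have "\<dots> = \<pi> a * v $ i + (\<Sum>l\<in>{0..<d}. C $$ (i, l) * \<pi> (pv C P v $ l))"
    using pCons.IH by simp
  also have "\<dots> = \<pi> (v $ i * a) + (\<Sum>l\<in>{0..<d}. \<pi> (C $$ (i, l) * pv C P v $ l))"
  proof -
    have e1: "\<pi> (v $ i * a) = v $ i * \<pi> a" using hom vK[OF pCons.prems] by blast
    have e2: "(\<Sum>l\<in>{0..<d}. \<pi> (C $$ (i, l) * pv C P v $ l)) = (\<Sum>l\<in>{0..<d}. C $$ (i, l) * \<pi> (pv C P v $ l))"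
      by (rule sum.cong) (use hom CK C pCons.prems in \<open>auto simp: entries_in_def\<close>)
    show ?thesis unfolding e1 e2 by (simp add: mult.commute)
  qed
  also have "\<dots> = \<pi> (v $ i * a + (\<Sum>l\<in>{0..<d}. C $$ (i, l) * pv C P v $ l))"
    using add proj_sum[OF add, of "\<lambda>l. C $$ (i, l) * pv C P v $ l" "{0..<d}"] by simp
  also have "v $ i * a + (\<Sum>l\<in>{0..<d}. C $$ (i, l) * pv C P v $ l) = (a \<cdot>\<^sub>v v + C *\<^sub>v pv C P v) $ i"
    using pCons.prems C vc c1 by (simp add: scalar_prod_def mult.commute)
  also have "\<dots> = pv C (pCons a P) v $ i" by (simp add: pv_pCons[OF C vc])
  finally show ?case .
qed

lemma pv_zero_vec:
  assumes A: "A \<in> carrier_mat n n"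
  shows "pv A p (0\<^sub>v n) = 0\<^sub>v n"
proof (induction p rule: pCons_induct)
  case 0 then show ?case by (simp add: pv_0)
next
  case (pCons a p)
  have "pv A (pCons a p) (0\<^sub>v n) = a \<cdot>\<^sub>v 0\<^sub>v n + A *\<^sub>v 0\<^sub>v n" using pv_pCons[OF A, of "0\<^sub>v n"] pCons by simp
  also have "\<dots> = 0\<^sub>v n" using A by (intro eq_vecI) (auto simp: scalar_prod_def)
  finally show ?case .
qed

lemma prod_comp:
  "(\<Prod>c\<leftarrow>cs. [:- (c ^ N), 1:]) \<circ>\<^sub>p monom 1 N = (\<Prod>c\<leftarrow>cs. [:- c, 1:]) * (\<Prod>c\<leftarrow>cs. tpoly c N)"
proof (induction cs)
  case Nil then show ?case by (simp add: pcompose_1)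
next
  case (Cons c cs)
  have "(\<Prod>c\<leftarrow>c # cs. [:- (c ^ N), 1:]) \<circ>\<^sub>p monom 1 N
      = ([:- (c ^ N), 1:] \<circ>\<^sub>p monom 1 N) * ((\<Prod>c\<leftarrow>cs. [:- (c ^ N), 1:]) \<circ>\<^sub>p monom 1 N)"
    by (simp only: prod_list.Cons list.map pcompose_mult)
  also have "\<dots> = ([:- c, 1:] * tpoly c N) * ((\<Prod>c\<leftarrow>cs. [:- c, 1:]) * (\<Prod>c\<leftarrow>cs. tpoly c N))"
    unfolding tpoly_factor Cons.IH ..
  also have "\<dots> = (\<Prod>c\<leftarrow>c # cs. [:- c, 1:]) * (\<Prod>c\<leftarrow>c # cs. tpoly c N)"
    unfolding list.map prod_list.Cons by (simp only: ac_simps)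
  finally show ?case .
qed

lemma x_comp: "[:0, 1:] \<circ>\<^sub>p (q :: complex poly) = q"
  by (simp add: pcompose_pCons)

lemma monom_comp: "monom (1::complex) n \<circ>\<^sub>p monom 1 N = monom 1 (N * n)"
proof (rule poly_eq_poly_eq_iff[THEN iffD1], rule ext)
  fix x :: complex
  show "poly (monom 1 n \<circ>\<^sub>p monom 1 N) x = poly (monom 1 (N * n)) x"
    by (simp add: poly_pcompose poly_monom power_mult)
qed

theorem mainTheorem11:
  fixes K :: "complex set" and d N0 N :: nat and A :: "complex mat" and V :: "complex vec set"
  assumes "number_field K"
    and "N0 > 0"
    and "\<forall>L. finite_ext K L \<and> ext_degree K L \<le> d ^ 2 \<longrightarrow>
            (\<forall>z\<in>L. root_of_unity z \<longrightarrow> z ^ N0 = 1)"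
    and "N = N0"
    and "A \<in> GL_over d K"
    and "K_subspace K d V"
    and "\<exists>n\<ge>1. invariant_under (A ^\<^sub>m n) V"
  shows "invariant_under (A ^\<^sub>m N) V"
proof -
  have K: "subfield K" using assms(1) unfolding number_field_def finite_ext_def by blast
  have A: "A \<in> carrier_mat d d" and AK: "entries_in K A" using assms(5) unfolding GL_over_def by auto
  obtain Bi where Bi: "Bi \<in> carrier_mat d d" "Bi * A = 1\<^sub>m d" using assms(5) unfolding GL_over_def by auto
  obtain n where n: "n \<ge> 1" "invariant_under (A ^\<^sub>m n) V" using assms(7) by blast
  have VS: "K_subspace K d V" by (rule assms(6))
  have VK: "V \<subseteq> Kvecs K d" using VS unfolding K_subspace_def by blast
  have Vc: "V \<subseteq> carrier_vec d" using VK unfolding Kvecs_def by auto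
  have N0: "N > 0" using assms(2,4) by simp
  define M where "M = N * n"
  have M0: "M > 0" unfolding M_def using N0 n(1) by simp
  define C where "C = A ^\<^sub>m M"
  have CA: "C = (A ^\<^sub>m n) ^\<^sub>m N" unfolding C_def M_def using pow_mat_mult[OF A, of n N] by (simp add: mult.commute)
  have C: "C \<in> carrier_mat d d" unfolding C_def using A by simp
  have CK: "entries_in K C" unfolding C_def by (rule entries_pow[OF K A AK])
  have invC: "invariant_under C V" unfolding CA
    by (rule invariant_pow[OF _ Vc n(2)]) (use A in simp)
  obtain \<pi> where \<pi>: "\<forall>x y. \<pi> (x + y) = \<pi> x + \<pi> y" "\<forall>a x. a \<in> K \<longrightarrow> \<pi> (a * x) = a * \<pi> x"
    "\<forall>a\<in>K. \<pi> a = a" "\<forall>x. \<pi> x \<in> K"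
    using proj_exists[OF K] by blast
  have \<pi>0: "\<pi> 0 = 0" using \<pi>(1)[rule_format, of 0 0] by simp
  have cp: "degree (char_poly A) = d" "coeff (char_poly A) d = 1"
    using degree_monic_char_poly[OF A] by auto
  have cpK: "\<And>i. coeff (char_poly A) i \<in> K" by (rule charpoly_K[OF K A AK])
  have eig: "poly (char_poly A) c = 0 \<and> c \<noteq> 0" if ev: "eigenvalue A c" for c
  proof
    show "poly (char_poly A) c = 0" using ev eigenvalue_root_char_poly[OF A] by blast
    obtain u where u: "u \<in> carrier_vec d" "u \<noteq> 0\<^sub>v d" "A *\<^sub>v u = c \<cdot>\<^sub>v u"
      using ev A unfolding eigenvalue_def eigenvector_def by auto
    show "c \<noteq> 0"
    proof
      assume c0: "c = 0"
      have "u = (Bi * A) *\<^sub>v u" using Bi u by simp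
      also have "\<dots> = Bi *\<^sub>v (A *\<^sub>v u)" by (rule assoc_mult_mat_vec[of _ d d _ d]) (use Bi A u in auto)
      also have "A *\<^sub>v u = 0\<^sub>v d" using u c0 by (intro eq_vecI) auto
      also have "Bi *\<^sub>v 0\<^sub>v d = 0\<^sub>v d" using Bi by (intro eq_vecI) (auto simp: scalar_prod_def)
      finally show False using u by simp
    qed
  qed
  show ?thesis unfolding invariant_under_def
  proof
    fix v assume vV: "v \<in> V"
    have vc: "v \<in> carrier_vec d" and vK: "v \<in> Kvecs K d" using vV Vc VK by auto
    obtain cs where cs: "\<forall>c\<in>set cs. eigenvalue A c" "pv A (\<Prod>c\<leftarrow>cs. [:- c, 1:]) v = 0\<^sub>v d"
      using eig_annihilator[OF A vc] by blast
    define bs where "bs = map (\<lambda>c. c ^ N) cs"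
    have bnz: "\<forall>b\<in>set bs. b \<noteq> 0" unfolding bs_def using cs(1) eig by auto
    have binj: "inj_on (\<lambda>b. b ^ n) (set bs)"
    proof
      fix b1 b2 assume b1: "b1 \<in> set bs" and b2: "b2 \<in> set bs" and eq: "b1 ^ n = b2 ^ n"
      obtain c1 where c1: "c1 \<in> set cs" "b1 = c1 ^ N" using b1 unfolding bs_def by auto
      obtain c2 where c2: "c2 \<in> set cs" "b2 = c2 ^ N" using b2 unfolding bs_def by auto
      have e1: "poly (char_poly A) c1 = 0" "poly (char_poly A) c2 = 0" "c2 \<noteq> 0"
        using eig cs(1) c1 c2 by auto
      have "c1 ^ M = c2 ^ M" unfolding M_def using eq c1 c2 by (simp add: power_mult)
      then have "c1 ^ N0 = c2 ^ N0"
        by (rule root_unity_lemma[OF K cpK cp e1 M0 _ assms(3)])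
      then show "b1 = b2" using c1 c2 assms(4) by simp
    qed
    obtain P where P: "(\<Prod>b\<leftarrow>bs. [:- b, 1:]) dvd [:0, 1:] - P \<circ>\<^sub>p monom 1 n"
      using interp[of n bs] n(1) bnz binj by auto
    then obtain h where h: "[:0, 1:] - P \<circ>\<^sub>p monom 1 n = (\<Prod>b\<leftarrow>bs. [:- b, 1:]) * h"
      by (auto elim: dvdE)
    define H2 where "H2 = (\<Prod>c\<leftarrow>cs. tpoly c N) * (h \<circ>\<^sub>p monom 1 N)"
    have "([:0, 1:] - P \<circ>\<^sub>p monom 1 n) \<circ>\<^sub>p monom 1 N = ((\<Prod>b\<leftarrow>bs. [:- b, 1:]) * h) \<circ>\<^sub>p monom 1 N"
      unfolding h ..
    then have "monom 1 N - P \<circ>\<^sub>p monom 1 M = (\<Prod>c\<leftarrow>cs. [:- c, 1:]) * H2"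
      unfolding pcompose_diff pcompose_mult x_comp pcompose_assoc[symmetric] monom_comp H2_def
        bs_def map_map o_def prod_comp M_def by (simp add: mult.commute mult.left_commute)
    then have mon: "monom 1 N = P \<circ>\<^sub>p monom 1 M + H2 * (\<Prod>c\<leftarrow>cs. [:- c, 1:])"
      by (simp add: algebra_simps)
    have "(A ^\<^sub>m N) *\<^sub>v v = pv A (monom 1 N) v" by (rule pv_monom[OF A vc, symmetric])
    also have "\<dots> = pv A (P \<circ>\<^sub>p monom 1 M) v + pv A H2 (pv A (\<Prod>c\<leftarrow>cs. [:- c, 1:]) v)"
      unfolding mon pv_add[OF A vc] pv_mult[OF A vc] ..
    also have "pv A H2 (pv A (\<Prod>c\<leftarrow>cs. [:- c, 1:]) v) = 0\<^sub>v d"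
      unfolding cs(2) by (rule pv_zero_vec[OF A])
    also have "pv A (P \<circ>\<^sub>p monom 1 M) v = pv C P v" unfolding C_def by (rule pv_comp[OF A vc])
    finally have eqC: "(A ^\<^sub>m N) *\<^sub>v v = pv C P v" using pv_carrier[OF C vc, of P] by simp
    have "(A ^\<^sub>m N) *\<^sub>v v = pv C (map_poly \<pi> P) v"
    proof (rule eq_vecI)
      have dP: "dim_vec (pv C (map_poly \<pi> P) v) = d"
        using pv_carrier[OF C vc, of "map_poly \<pi> P"] by (metis carrier_vecD)
      show "dim_vec ((A ^\<^sub>m N) *\<^sub>v v) = dim_vec (pv C (map_poly \<pi> P) v)"
        using dP A by simp
      fix i assume "i < dim_vec (pv C (map_poly \<pi> P) v)"
      then have i: "i < d" using dP by simp
      have inK: "((A ^\<^sub>m N) *\<^sub>v v) $ i \<in> K"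
        using vec_K[OF K _ entries_pow[OF K A AK] vK] A i unfolding Kvecs_def by auto
      have "pv C (map_poly \<pi> P) v $ i = \<pi> (pv C P v $ i)" by (rule pv_proj[OF K C CK vK \<pi>(1,2) i])
      also have "\<dots> = \<pi> (((A ^\<^sub>m N) *\<^sub>v v) $ i)" unfolding eqC ..
      also have "\<dots> = ((A ^\<^sub>m N) *\<^sub>v v) $ i" using \<pi>(3) inK by blast
      finally show "((A ^\<^sub>m N) *\<^sub>v v) $ i = pv C (map_poly \<pi> P) v $ i" by simp
    qed
    also have "pv C (map_poly \<pi> P) v \<in> V"
    proof (rule pv_in_V[OF K VS C invC vV])
      show "polyK K (map_poly \<pi> P)" unfolding polyK_def using \<pi>(4) by (simp add: coeff_map_poly[of \<pi>, OF \<pi>0])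
    qed
    finally show "(A ^\<^sub>m N) *\<^sub>v v \<in> V" .
  qed
qed

end
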